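(* Under the hypotheses of the Hölder-continuity theorem (kernel $k$ satisfying (K1)–(K2), $q\in[1,2)$, $p\in(2,\infty)$, $\omega\in L^q(\Omega)\cap L^p_{\mathrm{ul}}(\Omega)$), there is a constant $C>0$ depending only on $C_1,C_2,q$ (not on $p$) such that $$\int_\Omega|k(x,z)-k(y,z)|\,|\omega(z)|\,dz\le C\max\{1,\tfrac1{p-2}\}\big(\|\omega\|_{L^q(\Omega)}+\|\omega\|_{L^p_{\mathrm{ul}}(\Omega)}\big)\,p\,\mathrm{d}(x,y)^{1-2/p}$$ for all $x,y\in\Omega$. Moreover, if $\Theta$ is a growth function as in the context and $\omega\in L^q(\Omega)\cap Y^\Theta_{\mathrm{ul}}(\Omega)$, then there is a constant $C'>0$ depending only on $C_1,C_2,q$ (not on the behavior of $\Theta$ at infinity) such that $$\int_\Omega|k(x,z)-k(y,z)|\,|\omega(z)|\,dz\le C'\big(\|\omega\|_{L^q(\Omega)}+\|\omega\|_{Y^\Theta_{\mathrm{ul}}(\Omega)}\big)\,\phi_\Theta(\mathrm{d}(x,y))\quad\text{for all }x,y\in\Omega.$$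
   Context: Setting: $\Omega$ is either an open subset of $\mathbb{R}^2$ (not necessarily bounded) or $\mathbb{T}^2$; $\mathrm{d}$ is the Euclidean distance (resp. geodesic distance on $\mathbb{T}^2$); $B_r(x)$ the open ball. $L^p_{\mathrm{ul}}$: $\|f\|_{L^p_{\mathrm{ul}}(\Omega)}=\sup_{x\in\Omega}\|f\|_{L^p(\Omega\cap B_1(x))}$, $L^p_{\mathrm{ul}}(\Omega)$ the set of $f\in L^p_{\mathrm{loc}}$ with finite norm. Growth function: $\Theta:[1,\infty)\to(0,\infty)$ non-decreasing, normalized so that $\Theta(3)\ge1$. Yudovich space: $Y^\Theta_{\mathrm{ul}}(\Omega)=\{f\in\bigcap_{p\in[1,\infty)}L^p_{\mathrm{ul}}(\Omega):\|f\|_{Y^\Theta_{\mathrm{ul}}}=\sup_{p\ge1}\|f\|_{L^p_{\mathrm{ul}}(\Omega)}/\Theta(p)<\infty\}$. Modulus $\phi_\Theta:[0,\infty)\to[0,\infty)$: $\phi_\Theta(0)=0$, $\phi_\Theta(r)=r(1-\log r)\Theta(1-\log r)$ for $r\in(0,e^{-2}]$, $\phi_\Theta(r)=3e^{-2}\Theta(3)$ for $r>e^{-2}$. Kernel: $k:\Omega\times\Omega\to\mathbb{R}^2$ with (K1) $|k(x,y)|\le C_1/\mathrm{d}(x,y)$ for $x\neq y$; (K2) $|k(x,z)-k(y,z)|\le C_2\,\mathrm{d}(x,y)/(\mathrm{d}(x,z)\mathrm{d}(y,z))$ for $z\ne x,y$. *)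

theory Defs
  imports "HOL-Analysis.Analysis"
begin

type_synonym pt = "real ^ 2"

definition torus_fd :: "pt set" where
  "torus_fd = {x. \<forall>i. 0 \<le> x $ i \<and> x $ i < 1}"

definition torus_dist :: "pt \<Rightarrow> pt \<Rightarrow> real" where
  "torus_dist x y = Inf {dist x (y + v) | v. \<forall>i. v $ i \<in> \<int>}"

text \<open>In both cases the measure is Lebesgue measure restricted to the carrier.\<close>
definition admissible_domain :: "pt set \<Rightarrow> (pt \<Rightarrow> pt \<Rightarrow> real) \<Rightarrow> bool" where
  "admissible_domain S d \<longleftrightarrow> (open S \<and> d = dist) \<or> (S = torus_fd \<and> d = torus_dist)"

definition Lp_int :: "real \<Rightarrow> pt set \<Rightarrow> (pt \<Rightarrow> real) \<Rightarrow> ennreal" where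
  "Lp_int p A f = (\<integral>\<^sup>+ z\<in>A. ennreal (\<bar>f z\<bar> powr p) \<partial>lebesgue)"

definition memLp :: "real \<Rightarrow> pt set \<Rightarrow> (pt \<Rightarrow> real) \<Rightarrow> bool" where
  "memLp p A f \<longleftrightarrow> set_borel_measurable lebesgue A f \<and> Lp_int p A f < \<infinity>"

definition Lp_norm :: "real \<Rightarrow> pt set \<Rightarrow> (pt \<Rightarrow> real) \<Rightarrow> real" where
  "Lp_norm p A f = enn2real (Lp_int p A f) powr (1 / p)"

definition unit_ball :: "pt set \<Rightarrow> (pt \<Rightarrow> pt \<Rightarrow> real) \<Rightarrow> pt \<Rightarrow> pt set" where
  "unit_ball S d x = {y \<in> S. d x y < 1}"

definition ul_norm :: "real \<Rightarrow> pt set \<Rightarrow> (pt \<Rightarrow> pt \<Rightarrow> real) \<Rightarrow> (pt \<Rightarrow> real) \<Rightarrow> real" where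
  "ul_norm p S d f = (SUP x\<in>S. Lp_norm p (unit_ball S d x) f)"

definition memLp_ul :: "real \<Rightarrow> pt set \<Rightarrow> (pt \<Rightarrow> pt \<Rightarrow> real) \<Rightarrow> (pt \<Rightarrow> real) \<Rightarrow> bool" where
  "memLp_ul p S d f \<longleftrightarrow> set_borel_measurable lebesgue S f
     \<and> (\<forall>x\<in>S. Lp_int p (unit_ball S d x) f < \<infinity>)
     \<and> bdd_above ((\<lambda>x. Lp_norm p (unit_ball S d x) f) ` S)"

definition growth_function :: "(real \<Rightarrow> real) \<Rightarrow> bool" where
  "growth_function \<Theta> \<longleftrightarrow> (\<forall>p\<ge>1. \<Theta> p > 0) \<and> mono_on {1..} \<Theta> \<and> \<Theta> 3 \<ge> 1"

definition memY_ul :: "(real \<Rightarrow> real) \<Rightarrow> pt set \<Rightarrow> (pt \<Rightarrow> pt \<Rightarrow> real) \<Rightarrow> (pt \<Rightarrow> real) \<Rightarrow> bool" where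
  "memY_ul \<Theta> S d f \<longleftrightarrow> (\<forall>p\<ge>1. memLp_ul p S d f)
     \<and> bdd_above ((\<lambda>p. ul_norm p S d f / \<Theta> p) ` {1..})"

definition Y_ul_norm :: "(real \<Rightarrow> real) \<Rightarrow> pt set \<Rightarrow> (pt \<Rightarrow> pt \<Rightarrow> real) \<Rightarrow> (pt \<Rightarrow> real) \<Rightarrow> real" where
  "Y_ul_norm \<Theta> S d f = (SUP p\<in>{1..}. ul_norm p S d f / \<Theta> p)"

definition phi_Theta :: "(real \<Rightarrow> real) \<Rightarrow> real \<Rightarrow> real" where
  "phi_Theta \<Theta> r = (if r = 0 then 0
     else if r \<le> exp (-2) then r * (1 - ln r) * \<Theta> (1 - ln r)
     else 3 * exp (-2) * \<Theta> 3)"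

definition kernel_K1K2 :: "pt set \<Rightarrow> (pt \<Rightarrow> pt \<Rightarrow> real) \<Rightarrow> (pt \<Rightarrow> pt \<Rightarrow> pt) \<Rightarrow> real \<Rightarrow> real \<Rightarrow> bool" where
  "kernel_K1K2 S d k C1 C2 \<longleftrightarrow>
     (\<forall>x\<in>S. \<forall>y\<in>S. x \<noteq> y \<longrightarrow> norm (k x y) \<le> C1 / d x y)
   \<and> (\<forall>x\<in>S. \<forall>y\<in>S. \<forall>z\<in>S. z \<noteq> x \<and> z \<noteq> y \<longrightarrow>
        norm (k x z - k y z) \<le> C2 * d x y / (d x z * d y z))"

end

theory Submission
  imports Defs
begin


lemma emeasure_ball_le: "r \<ge> 0 \<Longrightarrow> emeasure lebesgue (ball (c::pt) r) \<le> ennreal (4 * r^2)"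
proof -
  assume r: "r \<ge> 0"
  have "emeasure lebesgue (ball c r) = emeasure lborel (ball c r)" by simp
  also have "\<dots> = ennreal (measure lborel (ball c r))"
    using emeasure_lborel_ball_finite[of c r] by (intro emeasure_eq_ennreal_measure) auto
  also have "measure lborel (ball c r) = r^2 * pi" using circle_area[OF r] by simp
  also have "r^2 * pi \<le> 4 * r^2" using pi_less_4 by (simp add: mult.commute mult_right_mono)
  finally show ?thesis by (simp add: ennreal_leI)
qed

lemma torus_set_ne: "{dist c (z + v) | v. \<forall>i. v $ i \<in> \<int>} \<noteq> {}"
  by (rule ccontr) (auto dest: spec[of _ 0])

lemma torus_set_bdd: "bdd_below {dist c (z + v) | v::pt. \<forall>i. v $ i \<in> \<int>}"
  by (rule bdd_belowI[of _ 0]) auto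

lemma torus_dist_nonneg: "torus_dist c z \<ge> 0"
  unfolding torus_dist_def by (rule cInf_greatest[OF torus_set_ne]) auto

lemma torus_dist_le: "torus_dist c z \<le> torus_dist c z' + dist z z'"
proof -
  have "torus_dist c z - dist z z' \<le> torus_dist c z'"
    unfolding torus_dist_def[of c z']
  proof (rule cInf_greatest[OF torus_set_ne])
    fix t assume "t \<in> {dist c (z' + v) | v. \<forall>i. v $ i \<in> \<int>}"
    then obtain v where v: "\<forall>i. v $ i \<in> \<int>" and t: "t = dist c (z' + v)" by auto
    have "torus_dist c z \<le> dist c (z + v)"
      unfolding torus_dist_def by (rule cInf_lower[OF _ torus_set_bdd]) (use v in auto)
    also have "\<dots> \<le> dist c (z' + v) + dist (z' + v) (z + v)" by (rule dist_triangle)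
    also have "dist (z' + v) (z + v) = dist z z'" by (simp add: dist_norm norm_minus_commute)
    finally show "torus_dist c z - dist z z' \<le> t" using t by simp
  qed
  then show ?thesis by simp
qed

lemma torus_dist_cont: "continuous_on UNIV (torus_dist c)"
proof (rule lipschitz_on_continuous_on)
  show "1-lipschitz_on UNIV (torus_dist c)"
  proof (rule lipschitz_onI)
    fix x y :: pt
    have "torus_dist c x \<le> torus_dist c y + dist x y" by (rule torus_dist_le)
    moreover have "torus_dist c y \<le> torus_dist c x + dist y x" by (rule torus_dist_le)
    ultimately show "dist (torus_dist c x) (torus_dist c y) \<le> 1 * dist x y"
      by (simp add: dist_real_def dist_commute abs_le_iff)
  qed simp
qed

lemma cont_meas: "continuous_on UNIV (f::pt \<Rightarrow> real) \<Longrightarrow> f \<in> borel_measurable lebesgue"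
  by (drule borel_measurable_continuous_onI) (simp add: measurable_completion measurable_lborel2)

lemma int_small: "(m::real) \<in> \<int> \<Longrightarrow> -2 < m \<Longrightarrow> m < 2 \<Longrightarrow> m \<in> {-1,0,1}"
proof -
  assume "m \<in> \<int>" "-2 < m" "m < 2"
  then obtain n::int where n: "m = of_int n" by (auto elim: Ints_cases)
  with \<open>-2 < m\<close> \<open>m < 2\<close> have "-2 < n" "n < 2" by linarith+
  then have "n = -1 \<or> n = 0 \<or> n = 1" by linarith
  then show ?thesis using n by auto
qed

lemma torus_cover:
  assumes c: "c \<in> torus_fd" and r: "0 < r" "r \<le> 1"
  shows "{z \<in> torus_fd. torus_dist c z < r} \<subseteq>
    (\<Union>ab\<in>{-1,0,1::real}\<times>{-1,0,1::real}. ball (c - vector [fst ab, snd ab]) r)"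
proof
  fix z assume "z \<in> {z \<in> torus_fd. torus_dist c z < r}"
  then have z: "z \<in> torus_fd" and zr: "torus_dist c z < r" by auto
  obtain t where "t \<in> {dist c (z + v) | v. \<forall>i. v $ i \<in> \<int>}" "t < r"
    using cInf_lessD[OF torus_set_ne zr[unfolded torus_dist_def]] by blast
  then obtain v where v: "\<forall>i. v $ i \<in> \<int>" and vr: "dist c (z + v) < r" by auto
  have comp: "v $ i \<in> {-1,0,1}" for i
  proof (rule int_small)
    show "v $ i \<in> \<int>" using v by auto
    have "\<bar>(c - (z + v)) $ i\<bar> \<le> norm (c - (z + v))" by (rule component_le_norm_cart)
    also have "\<dots> < 1" using vr r by (simp add: dist_norm)
    finally have "\<bar>c $ i - z $ i - v $ i\<bar> < 1" by simp
    moreover have "0 \<le> c $ i" "c $ i < 1" "0 \<le> z $ i" "z $ i < 1"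
      using c z by (auto simp: torus_fd_def)
    ultimately show "-2 < v $ i" "v $ i < 2" by (auto simp: abs_less_iff)
  qed
  have veq: "v = vector [v $ 1, v $ 2]"
    by (simp add: vec_eq_iff forall_2 vector_2)
  have "z \<in> ball (c - v) r"
    using vr by (simp add: dist_norm algebra_simps)
  then show "z \<in> (\<Union>ab\<in>{-1,0,1::real}\<times>{-1,0,1::real}. ball (c - vector [fst ab, snd ab]) r)"
    using comp[of 1] comp[of 2] veq by (intro UN_I[of "(v$1, v$2)"]) auto
qed

lemma torus_fd_ball: "torus_fd \<subseteq> ball 0 3"
proof
  fix z :: pt assume z: "z \<in> torus_fd"
  have "norm z \<le> (\<Sum>i\<in>UNIV. \<bar>z $ i\<bar>)" by (rule norm_le_l1_cart)
  also have "\<dots> = \<bar>z $ 1\<bar> + \<bar>z $ 2\<bar>" by (simp add: UNIV_2)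
  also have "\<dots> < 3" using z unfolding torus_fd_def
    by (smt (verit, best) mem_Collect_eq)
  finally show "z \<in> ball 0 3" by simp
qed

lemma torus_fd_meas: "torus_fd \<in> sets lebesgue"
proof -
  have "torus_fd \<in> sets borel" unfolding torus_fd_def by measurable
  then show ?thesis by auto
qed

lemma torus_level_meas:
  assumes c: "c \<in> torus_fd" and r: "0 < r"
  shows "emeasure lebesgue {z \<in> torus_fd. torus_dist c z < r} \<le> ennreal (36 * r^2)"
proof (cases "r \<le> 1")
  case True
  let ?I = "{-1,0,1::real}\<times>{-1,0,1::real}"
  let ?A = "\<lambda>ab. ball (c - vector [fst ab, snd ab]) r"
  have "emeasure lebesgue {z \<in> torus_fd. torus_dist c z < r} \<le> emeasure lebesgue (\<Union>ab\<in>?I. ?A ab)"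
    by (rule emeasure_mono[OF torus_cover[OF c r True]]) auto
  also have "\<dots> \<le> (\<Sum>ab\<in>?I. emeasure lebesgue (?A ab))"
    by (rule emeasure_subadditive_finite) auto
  also have "\<dots> \<le> (\<Sum>ab\<in>?I. ennreal (4 * r^2))"
    by (rule sum_mono, rule emeasure_ball_le) (use r in auto)
  also have "\<dots> = ennreal (36 * r^2)"
    using ennreal_mult[of 9 "4*r^2"] by simp
  finally show ?thesis .
next
  case False
  have "emeasure lebesgue {z \<in> torus_fd. torus_dist c z < r} \<le> emeasure lebesgue (ball (0::pt) 3)"
    by (rule emeasure_mono) (use torus_fd_ball in auto)
  also have "\<dots> \<le> ennreal (4 * 3^2)" by (rule emeasure_ball_le) simp
  also have "\<dots> \<le> ennreal (36 * r^2)"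
    using False by (intro ennreal_leI) (simp add: power_le_one_iff one_le_power)
  finally show ?thesis .
qed

definition good_dom :: "pt set \<Rightarrow> (pt \<Rightarrow> pt \<Rightarrow> real) \<Rightarrow> bool" where
  "good_dom S d \<longleftrightarrow> S \<in> sets lebesgue \<and> (\<forall>c\<in>S. d c \<in> borel_measurable lebesgue)
     \<and> (\<forall>c\<in>S. \<forall>z. d c z \<ge> 0)
     \<and> (\<forall>c\<in>S. \<forall>r>0. emeasure lebesgue {z \<in> S. d c z < r} \<le> ennreal (36 * r^2))"

lemma admissible_good: "admissible_domain S d \<Longrightarrow> good_dom S d"
  unfolding admissible_domain_def
proof (elim disjE conjE)
  assume S: "open S" and d: "d = dist"
  show "good_dom S d" unfolding good_dom_def d
  proof (intro conjI ballI allI impI)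
    show "S \<in> sets lebesgue" using S by auto
    fix c assume "c \<in> S"
    show "dist c \<in> borel_measurable lebesgue" by (rule cont_meas) (intro continuous_intros)
    show "0 \<le> dist c z" for z by simp
    fix r :: real assume r: "0 < r"
    have "emeasure lebesgue {z \<in> S. dist c z < r} \<le> emeasure lebesgue (ball c r)"
      by (rule emeasure_mono) auto
    also have "\<dots> \<le> ennreal (4 * r^2)" by (rule emeasure_ball_le) (use r in auto)
    also have "\<dots> \<le> ennreal (36 * r^2)" by (intro ennreal_leI) simp
    finally show "emeasure lebesgue {z \<in> S. dist c z < r} \<le> ennreal (36 * r^2)" .
  qed
next
  assume S: "S = torus_fd" and d: "d = torus_dist"
  show "good_dom S d" unfolding good_dom_def S d
    using torus_fd_meas cont_meas[OF torus_dist_cont] torus_dist_nonneg torus_level_meas by blast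
qed




lemma holder_nn:
  fixes f g :: "'a \<Rightarrow> real"
  assumes p: "1 < p" and p': "1 < p'" and pq: "1/p + 1/p' = 1"
    and fm: "f \<in> borel_measurable M" and f0: "\<And>z. f z \<ge> 0"
    and gm: "g \<in> borel_measurable M" and g0: "\<And>z. g z \<ge> 0"
    and F: "F \<ge> 0" "(\<integral>\<^sup>+ z. ennreal (f z powr p) \<partial>M) \<le> ennreal (F powr p)"
    and G: "G > 0" "(\<integral>\<^sup>+ z. ennreal (g z powr p') \<partial>M) \<le> ennreal (G powr p')"
  shows "(\<integral>\<^sup>+ z. ennreal (f z * g z) \<partial>M) \<le> ennreal (F * G)"
proof (cases "F = 0")
  case True
  then have "(\<integral>\<^sup>+ z. ennreal (f z powr p) \<partial>M) = 0" using F p by simp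
  then have "AE z in M. ennreal (f z powr p) = 0"
    by (subst (asm) nn_integral_0_iff_AE) (use fm in auto)
  then have "AE z in M. f z = 0" by eventually_elim (use p f0 in auto)
  then have "(\<integral>\<^sup>+ z. ennreal (f z * g z) \<partial>M) = (\<integral>\<^sup>+ z. 0 \<partial>M)"
    by (intro nn_integral_cong_AE) auto
  then show ?thesis by simp
next
  case False
  with F have Fp: "F > 0" by simp
  define \<alpha> where "\<alpha> = G * F / (p * F powr p)"
  define \<beta> where "\<beta> = F * G / (p' * G powr p')"
  have \<alpha>0: "\<alpha> \<ge> 0" and \<beta>0: "\<beta> \<ge> 0" using Fp G p p' by (auto simp: \<alpha>_def \<beta>_def)
  have pw: "f z * g z \<le> \<alpha> * f z powr p + \<beta> * g z powr p'" for z
  proof -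
    have "(f z / F) * (g z / G) \<le> (f z / F) powr p / p + (g z / G) powr p' / p'"
      by (rule Youngs_inequality) (use p p' pq f0 g0 Fp G in auto)
    then have "(F * G) * ((f z / F) * (g z / G)) \<le> (F * G) * ((f z / F) powr p / p + (g z / G) powr p' / p')"
      using Fp G by (intro mult_left_mono) auto
    also have "(F * G) * ((f z / F) * (g z / G)) = f z * g z" using Fp G by simp
    also have "(F * G) * ((f z / F) powr p / p + (g z / G) powr p' / p') = \<alpha> * f z powr p + \<beta> * g z powr p'"
      using Fp G f0[of z] g0[of z] by (simp add: \<alpha>_def \<beta>_def powr_divide field_simps)
    finally show ?thesis .
  qed
  have "(\<integral>\<^sup>+ z. ennreal (f z * g z) \<partial>M) \<le> (\<integral>\<^sup>+ z. ennreal (\<alpha> * f z powr p) + ennreal (\<beta> * g z powr p') \<partial>M)"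
    by (intro nn_integral_mono) (use pw \<alpha>0 \<beta>0 in \<open>auto simp: ennreal_plus[symmetric] simp del: ennreal_plus intro!: ennreal_leI\<close>)
  also have "\<dots> = (\<integral>\<^sup>+ z. ennreal (\<alpha> * f z powr p) \<partial>M) + (\<integral>\<^sup>+ z. ennreal (\<beta> * g z powr p') \<partial>M)"
    by (rule nn_integral_add) (use fm gm in auto)
  also have "(\<integral>\<^sup>+ z. ennreal (\<alpha> * f z powr p) \<partial>M) = ennreal \<alpha> * (\<integral>\<^sup>+ z. ennreal (f z powr p) \<partial>M)"
    by (subst nn_integral_cmult[symmetric]) (use fm \<alpha>0 in \<open>auto simp: ennreal_mult\<close>)
  also have "(\<integral>\<^sup>+ z. ennreal (\<beta> * g z powr p') \<partial>M) = ennreal \<beta> * (\<integral>\<^sup>+ z. ennreal (g z powr p') \<partial>M)"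
    by (subst nn_integral_cmult[symmetric]) (use gm \<beta>0 in \<open>auto simp: ennreal_mult\<close>)
  also have "ennreal \<alpha> * (\<integral>\<^sup>+ z. ennreal (f z powr p) \<partial>M) + ennreal \<beta> * (\<integral>\<^sup>+ z. ennreal (g z powr p') \<partial>M)
      \<le> ennreal \<alpha> * ennreal (F powr p) + ennreal \<beta> * ennreal (G powr p')"
    by (intro add_mono mult_left_mono F G) auto
  also have "\<dots> = ennreal (\<alpha> * F powr p + \<beta> * G powr p')"
    using \<alpha>0 \<beta>0 by (simp add: ennreal_mult ennreal_plus)
  also have "\<alpha> * F powr p + \<beta> * G powr p' = F * G * (1/p + 1/p')"
    using Fp G p p' by (simp add: \<alpha>_def \<beta>_def field_simps)
  finally show ?thesis using pq by simp
qed




lemma ennreal_le_suminf: "(f::nat\<Rightarrow>ennreal) k \<le> suminf f"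
  using sum_le_suminf[of f "{k}"] by simp

lemma dyadic_index:
  assumes "1 \<le> (t::real)" shows "\<exists>k::nat. 2^k \<le> t \<and> t < 2^(k+1)"
proof -
  obtain n where n: "t < (2::real)^n" using real_arch_pow[of 2 t] by auto
  define m where "m = (LEAST n. t < (2::real)^n)"
  have m: "t < 2^m" unfolding m_def by (rule LeastI[of _ n]) (rule n)
  have "m \<noteq> 0" proof assume "m = 0" with m assms show False by simp qed
  then obtain k where k: "m = Suc k" by (cases m) auto
  have "\<not> t < 2^k" proof
    assume "t < 2^k" then have "m \<le> k" unfolding m_def by (rule Least_le)
    with k show False by simp
  qed
  then show ?thesis using m k by (intro exI[of _ k]) auto
qed

lemma dyadic_gen:
  fixes a h :: "'a \<Rightarrow> real"
  assumes S: "S \<in> sets M" and am: "a \<in> borel_measurable M"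
    and mb: "\<And>r. r > 0 \<Longrightarrow> emeasure M {z \<in> S. a z < r} \<le> ennreal (A * r^2)"
    and A: "A \<ge> 0"
    and hi: "\<And>k. hi k > 0" and c: "\<And>k. c k \<ge> 0"
    and sm: "summable (\<lambda>k. c k * (A * (hi k)^2))"
    and h: "\<And>z. z \<in> S \<Longrightarrow> h z \<ge> 0 \<and> (h z = 0 \<or> (\<exists>k. lo k \<le> a z \<and> a z < hi k \<and> h z \<le> c k))"
  shows "(\<integral>\<^sup>+ z\<in>S. ennreal (h z) \<partial>M) \<le> ennreal (\<Sum>k. c k * (A * (hi k)^2))"
proof -
  define E where "E k = {z \<in> S. lo k \<le> a z \<and> a z < hi k}" for k
  have Em: "E k \<in> sets M" for k unfolding E_def using S am by measurable
  have "(\<integral>\<^sup>+ z\<in>S. ennreal (h z) \<partial>M) \<le> (\<integral>\<^sup>+ z. (\<Sum>k. ennreal (c k) * indicator (E k) z) \<partial>M)"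
  proof (intro nn_integral_mono)
    fix z
    show "ennreal (h z) * indicator S z \<le> (\<Sum>k. ennreal (c k) * indicator (E k) z)"
    proof (cases "z \<in> S")
      case True
      from h[OF True] show ?thesis
      proof (elim conjE disjE exE)
        assume "h z = 0" then show ?thesis by simp
      next
        fix k assume k: "lo k \<le> a z" "a z < hi k" "h z \<le> c k"
        have "ennreal (h z) * indicator S z \<le> ennreal (c k) * indicator (E k) z"
          using k True by (auto simp: E_def intro: ennreal_leI)
        also have "\<dots> \<le> (\<Sum>k. ennreal (c k) * indicator (E k) z)" by (rule ennreal_le_suminf)
        finally show ?thesis .
      qed
    qed simp
  qed
  also have "\<dots> = (\<Sum>k. (\<integral>\<^sup>+ z. ennreal (c k) * indicator (E k) z \<partial>M))"
    by (rule nn_integral_suminf) (use Em in auto)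
  also have "\<dots> = (\<Sum>k. ennreal (c k) * emeasure M (E k))"
    using Em by (simp add: nn_integral_cmult_indicator)
  also have "\<dots> \<le> (\<Sum>k. ennreal (c k * (A * (hi k)^2)))"
  proof (intro suminf_le)
    fix k
    have "emeasure M (E k) \<le> emeasure M {z \<in> S. a z < hi k}"
      by (rule emeasure_mono) (use S am in \<open>auto simp: E_def\<close>)
    also have "\<dots> \<le> ennreal (A * (hi k)^2)" by (rule mb[OF hi])
    finally have "emeasure M (E k) \<le> ennreal (A * (hi k)^2)" .
    then have "ennreal (c k) * emeasure M (E k) \<le> ennreal (c k) * ennreal (A * (hi k)^2)"
      by (rule mult_left_mono) auto
    also have "\<dots> = ennreal (c k * (A * (hi k)^2))" using c[of k] A by (simp add: ennreal_mult)
    finally show "ennreal (c k) * emeasure M (E k) \<le> ennreal (c k * (A * (hi k)^2))" .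
  qed auto
  also have "\<dots> = ennreal (\<Sum>k. c k * (A * (hi k)^2))"
    by (rule suminf_ennreal2) (use c A sm in auto)
  finally show ?thesis .
qed


lemma dyadic_index2:
  assumes "1 < (t::real)" shows "\<exists>k::nat. 2^k < t \<and> t \<le> 2^(k+1)"
proof -
  obtain n where n: "t \<le> (2::real)^n" using real_arch_pow[of 2 t] by (auto intro: less_imp_le)
  define m where "m = (LEAST n. t \<le> (2::real)^n)"
  have m: "t \<le> 2^m" unfolding m_def by (rule LeastI[of _ n]) (rule n)
  have "m \<noteq> 0" proof assume "m = 0" with m assms show False by simp qed
  then obtain k where k: "m = Suc k" by (cases m) auto
  have "\<not> t \<le> 2^k" proof
    assume "t \<le> 2^k" then have "m \<le> k" unfolding m_def by (rule Least_le)
    with k show False by simp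
  qed
  then show ?thesis using m k by (intro exI[of _ k]) auto
qed

lemma algA: "(h::real) > 0 \<Longrightarrow> (h/2) powr (-s) * (A * h^2) = A * 2 powr s * h powr (2-s)"
proof -
  assume h: "h > 0"
  have "(h/2) powr (-s) = h powr (-s) / 2 powr (-s)" by (rule powr_divide)
  also have "2 powr (-s) = inverse ((2::real) powr s)" by (rule powr_minus)
  finally have 1: "(h/2) powr (-s) = h powr (-s) * 2 powr s" by (simp only: divide_inverse inverse_inverse_eq)
  have "h powr (2 + -s) = h powr 2 * h powr (-s)" by (rule powr_add)
  also have "h powr 2 = h^2" using h by (intro powr_numeral) simp
  finally have 2: "h powr (2-s) = h^2 * h powr (-s)" by (simp only: diff_conv_add_uminus)
  show ?thesis unfolding 1 2 by (simp only: mult_ac)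
qed

lemma algC: "(l::real) > 0 \<Longrightarrow> l powr (-s) * (A * (2*l)^2) = 4 * A * l powr (2-s)"
proof -
  assume h: "l > 0"
  have "l powr (2 + -s) = l powr 2 * l powr (-s)" by (rule powr_add)
  also have "l powr 2 = l^2" using h by (intro powr_numeral) simp
  finally have 2: "l powr (2-s) = l^2 * l powr (-s)" by (simp only: diff_conv_add_uminus)
  show ?thesis unfolding 2 by (simp add: power_mult_distrib mult_ac)
qed

lemma algB: "(\<rho>::real) > 0 \<Longrightarrow> (\<rho> * 2 powr (t * real k)) powr e = \<rho> powr e * (2 powr (t*e))^k"
  by (simp add: powr_mult powr_powr powr_realpow[symmetric] mult_ac)

lemma two_powr_neg: "(2::real) powr (-1 * real k) = 1 / 2^k"
  by (simp add: powr_minus powr_realpow divide_inverse)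

lemma two_powr_pos: "(2::real) powr (1 * real k) = 2^k"
  by (simp add: powr_realpow)

locale lvl =
  fixes M :: "'a measure" and S :: "'a set" and a :: "'a \<Rightarrow> real" and A :: real
  assumes S: "S \<in> sets M" and am: "a \<in> borel_measurable M" and a0: "\<And>z. a z \<ge> 0"
    and mb: "\<And>r. r > 0 \<Longrightarrow> emeasure M {z \<in> S. a z < r} \<le> ennreal (A * r^2)"
    and A: "A \<ge> 0"
begin

lemma L1:
  assumes s: "0 < s" "s < 2" and r: "\<rho> > 0"
  shows "(\<integral>\<^sup>+ z\<in>S. ennreal (indicator {z. a z < \<rho>} z * a z powr (-s)) \<partial>M)
     \<le> ennreal (A * 2 powr s / (1 - 2 powr (-1 * (2-s))) * \<rho> powr (2-s))"
proof -
  define x where "x = (2::real) powr (-1 * (2-s))"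
  have x: "0 \<le> x" "x < 1" using s powr_less_mono[of "-1*(2-s)" 0 "2::real"] by (auto simp: x_def)
  define hi where "hi k = \<rho> * 2 powr (-1 * real k)" for k :: nat
  have hik: "hi k = \<rho> / 2^k" for k unfolding hi_def two_powr_neg by simp
  have hip: "hi k > 0" for k using r by (simp add: hik)
  let ?c = "\<lambda>k. (hi k / 2) powr (-s)"
  have eq: "?c k * (A * (hi k)^2) = A * 2 powr s * \<rho> powr (2-s) * x^k" for k
    unfolding algA[OF hip] unfolding hi_def algB[OF r] x_def by (simp only: mult_ac)
  have sm: "summable (\<lambda>k. ?c k * (A * (hi k)^2))"
    unfolding eq using x by (intro summable_mult summable_geometric) auto
  have "(\<integral>\<^sup>+ z\<in>S. ennreal (indicator {z. a z < \<rho>} z * a z powr (-s)) \<partial>M)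
     \<le> ennreal (\<Sum>k. ?c k * (A * (hi k)^2))"
  proof (rule dyadic_gen[OF S am mb A hip])
    show "0 \<le> ?c k" for k by simp
    show "summable (\<lambda>k. ?c k * (A * (hi k)^2))" by (rule sm)
    fix z assume "z \<in> S"
    show "0 \<le> indicator {z. a z < \<rho>} z * a z powr (-s) \<and>
      (indicator {z. a z < \<rho>} z * a z powr (-s) = 0 \<or>
       (\<exists>k. hi k / 2 \<le> a z \<and> a z < hi k \<and> indicator {z. a z < \<rho>} z * a z powr (-s) \<le> ?c k))"
    proof (cases "a z < \<rho> \<and> a z \<noteq> 0")
      case False then show ?thesis by (auto simp: indicator_def)
    next
      case True
      then have az: "0 < a z" "a z < \<rho>" using a0[of z] by auto
      then obtain k where k: "2^k < \<rho> / a z" "\<rho> / a z \<le> 2^(k+1)"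
        using dyadic_index2[of "\<rho> / a z"] by auto
      have lo: "hi k / 2 \<le> a z"
      proof -
        have "\<rho> \<le> 2^(k+1) * a z" using k az by (simp add: field_simps)
        then show ?thesis using az unfolding hik by (simp add: field_simps)
      qed
      have hi: "a z < hi k"
      proof -
        have "2^k * a z < \<rho>" using k az by (simp add: field_simps)
        then show ?thesis using az unfolding hik by (simp add: field_simps)
      qed
      have "a z powr (-s) \<le> (hi k / 2) powr (-s)"
        by (rule powr_mono2') (use s hip[of k] lo in auto)
      then show ?thesis using az lo hi by (intro conjI disjI2 exI[of _ k]) auto
    qed
  qed
  also have "(\<Sum>k. ?c k * (A * (hi k)^2)) = (\<Sum>k. A * 2 powr s * \<rho> powr (2-s) * x^k)"
    unfolding eq ..
  also have "\<dots> = A * 2 powr s * \<rho> powr (2-s) * (1 / (1 - x))"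
    using x by (subst suminf_mult) (auto intro: summable_geometric simp: suminf_geometric)
  also have "\<dots> = A * 2 powr s / (1 - 2 powr (-1 * (2-s))) * \<rho> powr (2-s)" by (simp add: x_def)
  finally show ?thesis .
qed

lemma L2:
  assumes s: "2 < s" and r: "\<rho> > 0"
  shows "(\<integral>\<^sup>+ z\<in>S. ennreal (indicator {z. \<rho> \<le> a z} z * a z powr (-s)) \<partial>M)
     \<le> ennreal (4 * A / (1 - 2 powr (1 * (2-s))) * \<rho> powr (2-s))"
proof -
  define x where "x = (2::real) powr (1 * (2-s))"
  have x: "0 \<le> x" "x < 1" using s powr_less_mono[of "1*(2-s)" 0 "2::real"] by (auto simp: x_def)
  define lo where "lo k = \<rho> * 2 powr (1 * real k)" for k :: nat
  have lok: "lo k = \<rho> * 2^k" for k unfolding lo_def two_powr_pos by simp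
  have lop: "lo k > 0" for k using r by (simp add: lok)
  have hip: "2 * lo k > 0" for k using lop[of k] by simp
  let ?c = "\<lambda>k. (lo k) powr (-s)"
  have eq: "?c k * (A * (2 * lo k)^2) = 4 * A * \<rho> powr (2-s) * x^k" for k
    unfolding algC[OF lop] unfolding lo_def algB[OF r] x_def by (simp only: mult_ac)
  have sm: "summable (\<lambda>k. ?c k * (A * (2 * lo k)^2))"
    unfolding eq using x by (intro summable_mult summable_geometric) auto
  have "(\<integral>\<^sup>+ z\<in>S. ennreal (indicator {z. \<rho> \<le> a z} z * a z powr (-s)) \<partial>M)
     \<le> ennreal (\<Sum>k. ?c k * (A * (2 * lo k)^2))"
  proof (rule dyadic_gen[OF S am mb A hip])
    show "0 \<le> ?c k" for k by simp
    show "summable (\<lambda>k. ?c k * (A * (2 * lo k)^2))" by (rule sm)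
    fix z assume "z \<in> S"
    show "0 \<le> indicator {z. \<rho> \<le> a z} z * a z powr (-s) \<and>
      (indicator {z. \<rho> \<le> a z} z * a z powr (-s) = 0 \<or>
       (\<exists>k. lo k \<le> a z \<and> a z < 2 * lo k \<and> indicator {z. \<rho> \<le> a z} z * a z powr (-s) \<le> ?c k))"
    proof (cases "\<rho> \<le> a z")
      case False then show ?thesis by (auto simp: indicator_def)
    next
      case True
      then have az: "0 < a z" "\<rho> \<le> a z" using r by auto
      then obtain k where k: "2^k \<le> a z / \<rho>" "a z / \<rho> < 2^(k+1)"
        using dyadic_index[of "a z / \<rho>"] r by auto
      have lo: "lo k \<le> a z"
      proof -
        have "2^k * \<rho> \<le> a z" using k r by (simp add: field_simps)
        then show ?thesis unfolding lok by (simp add: mult.commute)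
      qed
      have hi: "a z < 2 * lo k"
      proof -
        have "a z < 2^(k+1) * \<rho>" using k r by (simp add: field_simps)
        then show ?thesis unfolding lok by (simp add: mult_ac)
      qed
      have "a z powr (-s) \<le> (lo k) powr (-s)"
        by (rule powr_mono2') (use s lop[of k] lo in auto)
      then show ?thesis using az lo hi by (intro conjI disjI2 exI[of _ k]) auto
    qed
  qed
  also have "(\<Sum>k. ?c k * (A * (2 * lo k)^2)) = (\<Sum>k. 4 * A * \<rho> powr (2-s) * x^k)"
    unfolding eq ..
  also have "\<dots> = 4 * A * \<rho> powr (2-s) * (1 / (1 - x))"
    using x by (subst suminf_mult) (auto intro: summable_geometric simp: suminf_geometric)
  also have "\<dots> = 4 * A / (1 - 2 powr (1 * (2-s))) * \<rho> powr (2-s)" by (simp add: x_def)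
  finally show ?thesis .
qed

end



lemma Lp_int_mono_set: "E \<subseteq> B \<Longrightarrow> Lp_int p E f \<le> Lp_int p B f"
  unfolding Lp_int_def by (intro nn_integral_mono) (auto split: split_indicator)

lemma Lp_norm_pow:
  assumes "Lp_int p E f < \<infinity>" "p > 0"
  shows "Lp_int p E f = ennreal (Lp_norm p E f powr p)" "Lp_norm p E f \<ge> 0"
proof -
  have "(enn2real (Lp_int p E f) powr (1/p)) powr p = enn2real (Lp_int p E f)"
    using assms by (simp add: powr_powr)
  then show "Lp_int p E f = ennreal (Lp_norm p E f powr p)"
    using assms unfolding Lp_norm_def by (simp add: less_top)
  show "Lp_norm p E f \<ge> 0" unfolding Lp_norm_def by simp
qed

lemma ul_bound:
  assumes ul: "memLp_ul p S d f" and c: "c \<in> S" and p: "p > 0"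
    and E: "E \<subseteq> unit_ball S d c"
  shows "Lp_int p E f \<le> ennreal (ul_norm p S d f powr p)" "ul_norm p S d f \<ge> 0"
proof -
  let ?B = "unit_ball S d c"
  have fin: "Lp_int p ?B f < \<infinity>" using ul c unfolding memLp_ul_def by auto
  have bdd: "bdd_above ((\<lambda>x. Lp_norm p (unit_ball S d x) f) ` S)" using ul unfolding memLp_ul_def by auto
  have NU: "Lp_norm p ?B f \<le> ul_norm p S d f"
    unfolding ul_norm_def by (rule cSUP_upper[OF c bdd])
  note N = Lp_norm_pow[OF fin p]
  show U0: "ul_norm p S d f \<ge> 0" using NU N(2) by linarith
  have "Lp_int p E f \<le> Lp_int p ?B f" by (rule Lp_int_mono_set[OF E])
  also have "\<dots> = ennreal (Lp_norm p ?B f powr p)" by (rule N(1))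
  also have "\<dots> \<le> ennreal (ul_norm p S d f powr p)"
    by (intro ennreal_leI powr_mono2) (use p N(2) NU in auto)
  finally show "Lp_int p E f \<le> ennreal (ul_norm p S d f powr p)" .
qed

lemma holder_set:
  fixes \<omega> g :: "pt \<Rightarrow> real"
  assumes p: "1 < p" and E: "E \<in> sets lebesgue" "E \<subseteq> S"
    and \<omega>m: "set_borel_measurable lebesgue S \<omega>"
    and F: "F \<ge> 0" "Lp_int p E \<omega> \<le> ennreal (F powr p)"
    and gm: "g \<in> borel_measurable lebesgue" and g0: "\<And>z. g z \<ge> 0"
    and B: "B > 0" "(\<integral>\<^sup>+ z. ennreal (g z powr (p/(p-1))) \<partial>lebesgue) \<le> ennreal B"
  shows "(\<integral>\<^sup>+ z\<in>E. ennreal (g z * \<bar>\<omega> z\<bar>) \<partial>lebesgue) \<le> ennreal (F * B powr ((p-1)/p))"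
proof -
  define p' where "p' = p/(p-1)"
  have p': "1 < p'" using p by (simp add: p'_def field_simps)
  have pq: "1/p + 1/p' = 1" using p by (simp add: p'_def field_simps)
  define f where "f z = indicator E z * \<bar>indicator S z *\<^sub>R \<omega> z\<bar>" for z
  have fm: "f \<in> borel_measurable lebesgue" unfolding f_def
    by (intro borel_measurable_times borel_measurable_abs \<omega>m[unfolded set_borel_measurable_def] borel_measurable_indicator E(1))
  have f0: "f z \<ge> 0" for z by (simp add: f_def)
  have fE: "f z = indicator E z * \<bar>\<omega> z\<bar>" for z using E(2) by (auto simp: f_def split: split_indicator)
  have "(\<integral>\<^sup>+ z. ennreal (f z powr p) \<partial>lebesgue) = Lp_int p E \<omega>"
    unfolding Lp_int_def fE by (intro nn_integral_cong) (auto split: split_indicator)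
  then have Fb: "(\<integral>\<^sup>+ z. ennreal (f z powr p) \<partial>lebesgue) \<le> ennreal (F powr p)" using F by simp
  define G where "G = B powr (1/p')"
  have G: "G > 0" using B by (simp add: G_def)
  have "G powr p' = B" using B p' by (simp add: G_def powr_powr)
  then have Gb: "(\<integral>\<^sup>+ z. ennreal (g z powr p') \<partial>lebesgue) \<le> ennreal (G powr p')"
    using B by (simp add: p'_def)
  have "(\<integral>\<^sup>+ z. ennreal (f z * g z) \<partial>lebesgue) \<le> ennreal (F * G)"
    by (rule holder_nn[OF p p' pq fm f0 gm g0 F(1) Fb G Gb])
  moreover have "(\<integral>\<^sup>+ z\<in>E. ennreal (g z * \<bar>\<omega> z\<bar>) \<partial>lebesgue) = (\<integral>\<^sup>+ z. ennreal (f z * g z) \<partial>lebesgue)"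
    unfolding fE by (intro nn_integral_cong) (auto split: split_indicator simp: mult.commute)
  moreover have "1/p' = (p-1)/p" by (simp add: p'_def)
  ultimately show ?thesis by (simp add: G_def)
qed
lemma geo_bound:
  assumes t: "(t::real) > 0" shows "1 / (1 - 2 powr (-t)) \<le> 1 + 2/t"
proof -
  define u where "u = t * ln 2"
  have l2: "ln (2::real) \<ge> 1/2" using ln2_ge_two_thirds by simp
  have u: "u > 0" "u \<ge> t/2" using t l2 by (auto simp: u_def)
  have e: "2 powr (-t) = exp (-u)" by (simp add: powr_def u_def)
  have "exp u \<ge> 1 + u" by (rule exp_ge_add_one_self)
  then have "exp (-u) \<le> 1/(1+u)" using u by (simp add: exp_minus field_simps)
  then have "1 - exp (-u) \<ge> u/(1+u)" using u by (simp add: field_simps)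
  then have "1 / (1 - exp (-u)) \<le> 1 / (u/(1+u))" using u by (intro divide_left_mono) auto
  also have "\<dots> = 1 + 1/u" using u by (simp add: field_simps)
  also have "1/u \<le> 2/t" using u t by (simp add: field_simps)
  finally show ?thesis unfolding e by simp
qed
lemma powr_le_1plus: "(X::real) \<ge> 0 \<Longrightarrow> 0 \<le> \<theta> \<Longrightarrow> \<theta> \<le> 1 \<Longrightarrow> X powr \<theta> \<le> 1 + X"
proof -
  assume X: "X \<ge> 0" and th: "0 \<le> \<theta>" "\<theta> \<le> 1"
  show ?thesis
  proof (cases "X \<le> 1")
    case True
    then have "X powr \<theta> \<le> 1" using X th by (simp add: powr_le1)
    then show ?thesis using X by linarith
  next
    case False
    then have "X powr \<theta> \<le> X powr 1" using th by (intro powr_mono) auto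
    then show ?thesis using X by simp
  qed
qed


definition D1 :: "real \<Rightarrow> real" where
  "D1 s = 2 powr s / (1 - 2 powr (-1 * (2-s)))"
definition D2 :: "real \<Rightarrow> real" where
  "D2 s = 4 / (1 - 2 powr (1 * (2-s)))"

lemma D1_pos: "0 < s \<Longrightarrow> s < 2 \<Longrightarrow> D1 s > 0"
  unfolding D1_def using powr_less_mono[of "-1*(2-s)" 0 "2::real"] by (auto intro!: divide_pos_pos)
lemma D2_pos: "2 < s \<Longrightarrow> D2 s > 0"
  unfolding D2_def using powr_less_mono[of "1*(2-s)" 0 "2::real"] by (auto intro!: divide_pos_pos)

definition Kq :: "real \<Rightarrow> real" where
  "Kq q = (if q = 1 then 1 else (36 * D2 (q/(q-1))) powr ((q-1)/q))"

lemma Lp_norm_nonneg: "Lp_norm p E f \<ge> 0" by (simp add: Lp_norm_def)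

lemma Kq_nonneg: "Kq q \<ge> 0" by (simp add: Kq_def)

locale ctx =
  fixes S :: "pt set" and d :: "pt \<Rightarrow> pt \<Rightarrow> real" and \<omega> :: "pt \<Rightarrow> real"
  assumes gd: "good_dom S d" and \<omega>m: "set_borel_measurable lebesgue S \<omega>"
begin

lemma S_meas: "S \<in> sets lebesgue" using gd by (simp add: good_dom_def)
lemma d_meas: "c \<in> S \<Longrightarrow> d c \<in> borel_measurable lebesgue" using gd by (simp add: good_dom_def)
lemma d0: "c \<in> S \<Longrightarrow> d c z \<ge> 0" using gd by (simp add: good_dom_def)
lemma lvl_c: "c \<in> S \<Longrightarrow> lvl lebesgue S (d c) 36"
  using gd unfolding good_dom_def by unfold_locales auto

lemma I_small:
  assumes ul: "memLp_ul p S d \<omega>" and p: "2 < p" and c: "c \<in> S" and r: "0 < \<rho>" "\<rho> \<le> 1"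
  shows "(\<integral>\<^sup>+ z\<in>S. ennreal (indicator {z. d c z < \<rho>} z * d c z powr (-1) * \<bar>\<omega> z\<bar>) \<partial>lebesgue)
    \<le> ennreal (ul_norm p S d \<omega> * (36 * D1 (p/(p-1)) * \<rho> powr (2 - p/(p-1))) powr ((p-1)/p))"
proof -
  interpret lvl lebesgue S "d c" 36 by (rule lvl_c[OF c])
  define p' where "p' = p/(p-1)"
  have p': "1 < p'" "p' < 2" using p by (auto simp: p'_def field_simps)
  define E where "E = {z \<in> S. d c z < \<rho>}"
  have Em: "E \<in> sets lebesgue" unfolding E_def using S_meas d_meas[OF c] by measurable
  have EB: "E \<subseteq> unit_ball S d c" using r by (auto simp: E_def unit_ball_def)
  note U = ul_bound[OF ul c _ EB]
  define g where "g z = indicator S z * (indicator {z. d c z < \<rho>} z * d c z powr (-1))" for z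
  have gm: "g \<in> borel_measurable lebesgue" unfolding g_def using S_meas d_meas[OF c] by measurable
  have g0: "g z \<ge> 0" for z by (simp add: g_def)
  have gp: "g z powr p' = indicator S z * (indicator {z. d c z < \<rho>} z * d c z powr (-p'))" for z
  proof (cases "d c z = 0")
    case False
    have e: "(d c z powr (-1)) powr p' = d c z powr (-p')" by (subst powr_powr) simp
    show ?thesis using e by (auto simp: g_def split: split_indicator)
  qed (auto simp: g_def split: split_indicator)
  define B where "B = 36 * D1 p' * \<rho> powr (2 - p')"
  have B: "B > 0" using D1_pos[of p'] p' r by (simp add: B_def)
  have "(\<integral>\<^sup>+ z. ennreal (g z powr (p/(p-1))) \<partial>lebesgue)
      = (\<integral>\<^sup>+ z\<in>S. ennreal (indicator {z. d c z < \<rho>} z * d c z powr (-p')) \<partial>lebesgue)"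
    unfolding p'_def[symmetric] gp by (intro nn_integral_cong) (auto split: split_indicator)
  also have "\<dots> \<le> ennreal B" unfolding B_def D1_def using L1[of p' \<rho>] p' r by (simp add: mult_ac)
  finally have Bb: "(\<integral>\<^sup>+ z. ennreal (g z powr (p/(p-1))) \<partial>lebesgue) \<le> ennreal B" .
  have "(\<integral>\<^sup>+ z\<in>E. ennreal (g z * \<bar>\<omega> z\<bar>) \<partial>lebesgue) \<le> ennreal (ul_norm p S d \<omega> * B powr ((p-1)/p))"
    by (rule holder_set[OF _ Em _ \<omega>m U(2) U(1) gm g0 B Bb]) (use p in \<open>auto simp: E_def\<close>)
  moreover have "(\<integral>\<^sup>+ z\<in>S. ennreal (indicator {z. d c z < \<rho>} z * d c z powr (-1) * \<bar>\<omega> z\<bar>) \<partial>lebesgue)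
     = (\<integral>\<^sup>+ z\<in>E. ennreal (g z * \<bar>\<omega> z\<bar>) \<partial>lebesgue)"
    by (intro nn_integral_cong) (auto simp: g_def E_def split: split_indicator)
  ultimately show ?thesis by (simp add: B_def p'_def)
qed

lemma I_mid:
  assumes ul: "memLp_ul p S d \<omega>" and p: "2 < p" and c: "c \<in> S" and r: "0 < \<rho>"
  shows "(\<integral>\<^sup>+ z\<in>S. ennreal (indicator {z. \<rho> \<le> d c z} z * indicator {z. d c z < 1} z * d c z powr (-2) * \<bar>\<omega> z\<bar>) \<partial>lebesgue)
    \<le> ennreal (ul_norm p S d \<omega> * (36 * D2 (2 * (p/(p-1))) * \<rho> powr (2 - 2 * (p/(p-1)))) powr ((p-1)/p))"
proof -
  interpret lvl lebesgue S "d c" 36 by (rule lvl_c[OF c])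
  define p' where "p' = p/(p-1)"
  have p': "1 < p'" using p by (auto simp: p'_def field_simps)
  define E where "E = {z \<in> S. d c z < 1}"
  have Em: "E \<in> sets lebesgue" unfolding E_def using S_meas d_meas[OF c] by measurable
  have EB: "E \<subseteq> unit_ball S d c" by (auto simp: E_def unit_ball_def)
  note U = ul_bound[OF ul c _ EB]
  define g where "g z = indicator S z * (indicator {z. \<rho> \<le> d c z} z * d c z powr (-2))" for z
  have gm: "g \<in> borel_measurable lebesgue" unfolding g_def using S_meas d_meas[OF c] by measurable
  have g0: "g z \<ge> 0" for z by (simp add: g_def)
  have gp: "g z powr p' = indicator S z * (indicator {z. \<rho> \<le> d c z} z * d c z powr (-(2*p')))" for z
  proof (cases "\<rho> \<le> d c z")
    case True
    then have "d c z > 0" using r by simp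
    then show ?thesis using p' by (auto simp: g_def powr_powr split: split_indicator)
  qed (auto simp: g_def split: split_indicator)
  define B where "B = 36 * D2 (2*p') * \<rho> powr (2 - 2*p')"
  have B: "B > 0" using D2_pos[of "2*p'"] p' r by (simp add: B_def)
  have "(\<integral>\<^sup>+ z. ennreal (g z powr (p/(p-1))) \<partial>lebesgue)
      = (\<integral>\<^sup>+ z\<in>S. ennreal (indicator {z. \<rho> \<le> d c z} z * d c z powr (-(2*p'))) \<partial>lebesgue)"
    unfolding p'_def[symmetric] gp by (intro nn_integral_cong) (auto split: split_indicator)
  also have "\<dots> \<le> ennreal B" unfolding B_def D2_def using L2[of "2*p'" \<rho>] p' r by (simp add: mult_ac)
  finally have Bb: "(\<integral>\<^sup>+ z. ennreal (g z powr (p/(p-1))) \<partial>lebesgue) \<le> ennreal B" .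
  have "(\<integral>\<^sup>+ z\<in>E. ennreal (g z * \<bar>\<omega> z\<bar>) \<partial>lebesgue) \<le> ennreal (ul_norm p S d \<omega> * B powr ((p-1)/p))"
    by (rule holder_set[OF _ Em _ \<omega>m U(2) U(1) gm g0 B Bb]) (use p in \<open>auto simp: E_def\<close>)
  moreover have "(\<integral>\<^sup>+ z\<in>S. ennreal (indicator {z. \<rho> \<le> d c z} z * indicator {z. d c z < 1} z * d c z powr (-2) * \<bar>\<omega> z\<bar>) \<partial>lebesgue)
     = (\<integral>\<^sup>+ z\<in>E. ennreal (g z * \<bar>\<omega> z\<bar>) \<partial>lebesgue)"
    by (intro nn_integral_cong) (auto simp: g_def E_def split: split_indicator)
  ultimately show ?thesis by (simp add: B_def p'_def)
qed


lemma I_far: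
  assumes q: "1 \<le> q" "q < 2" and mq: "memLp q S \<omega>" and c: "c \<in> S"
  shows "(\<integral>\<^sup>+ z\<in>S. ennreal (indicator {z. 1 \<le> d c z} z * d c z powr (-1) * \<bar>\<omega> z\<bar>) \<partial>lebesgue)
    \<le> ennreal (Lp_norm q S \<omega> * Kq q)"
proof (cases "q = 1")
  case True
  have fin: "Lp_int q S \<omega> < \<infinity>" using mq by (simp add: memLp_def)
  have "(\<integral>\<^sup>+ z\<in>S. ennreal (indicator {z. 1 \<le> d c z} z * d c z powr (-1) * \<bar>\<omega> z\<bar>) \<partial>lebesgue)
      \<le> (\<integral>\<^sup>+ z\<in>S. ennreal (\<bar>\<omega> z\<bar> powr q) \<partial>lebesgue)"
  proof (intro nn_integral_mono)
    fix z
    have "indicator {z. 1 \<le> d c z} z * d c z powr (-1) \<le> (1::real)"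
      by (auto split: split_indicator simp: powr_minus inverse_le_1_iff)
    then have "indicator {z. 1 \<le> d c z} z * d c z powr (-1) * \<bar>\<omega> z\<bar> \<le> 1 * \<bar>\<omega> z\<bar>"
      by (rule mult_right_mono) simp
    then have "indicator {z. 1 \<le> d c z} z * d c z powr (-1) * \<bar>\<omega> z\<bar> \<le> \<bar>\<omega> z\<bar>"
      by (simp only: mult_1_left)
    then show "ennreal (indicator {z. 1 \<le> d c z} z * d c z powr (-1) * \<bar>\<omega> z\<bar>) * indicator S z
      \<le> ennreal (\<bar>\<omega> z\<bar> powr q) * indicator S z"
      using True by (auto split: split_indicator intro: ennreal_leI)
  qed
  also have "\<dots> = ennreal (Lp_norm q S \<omega> powr q)"
    using Lp_norm_pow(1)[OF fin] True by (simp add: Lp_int_def)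
  also have "\<dots> = ennreal (Lp_norm q S \<omega> * Kq q)"
    using Lp_norm_pow(2)[OF fin] True by (simp add: Kq_def)
  finally show ?thesis .
next
  case False
  with q have q1: "1 < q" by simp
  interpret lvl lebesgue S "d c" 36 by (rule lvl_c[OF c])
  define q' where "q' = q/(q-1)"
  have q': "2 < q'" using q q1 by (auto simp: q'_def field_simps)
  have fin: "Lp_int q S \<omega> < \<infinity>" using mq by (simp add: memLp_def)
  note N = Lp_norm_pow[OF fin]
  define g where "g z = indicator S z * (indicator {z. 1 \<le> d c z} z * d c z powr (-1))" for z
  have gm: "g \<in> borel_measurable lebesgue" unfolding g_def using S_meas d_meas[OF c] by measurable
  have g0: "g z \<ge> 0" for z by (simp add: g_def)
  have gp: "g z powr q' = indicator S z * (indicator {z. 1 \<le> d c z} z * d c z powr (-q'))" for z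
  proof -
    have e: "(d c z powr (-1)) powr q' = d c z powr (-q')" by (subst powr_powr) simp
    show ?thesis using e by (auto simp: g_def split: split_indicator)
  qed
  define B where "B = 36 * D2 q'"
  have B: "B > 0" using D2_pos[of q'] q' by (simp add: B_def)
  have "(\<integral>\<^sup>+ z. ennreal (g z powr (q/(q-1))) \<partial>lebesgue)
      = (\<integral>\<^sup>+ z\<in>S. ennreal (indicator {z. 1 \<le> d c z} z * d c z powr (-q')) \<partial>lebesgue)"
    unfolding q'_def[symmetric] gp by (intro nn_integral_cong) (auto split: split_indicator)
  also have "\<dots> \<le> ennreal B" unfolding B_def D2_def using L2[of q' 1] q' by (simp add: mult_ac)
  finally have Bb: "(\<integral>\<^sup>+ z. ennreal (g z powr (q/(q-1))) \<partial>lebesgue) \<le> ennreal B" .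
  have "(\<integral>\<^sup>+ z\<in>S. ennreal (g z * \<bar>\<omega> z\<bar>) \<partial>lebesgue) \<le> ennreal (Lp_norm q S \<omega> * B powr ((q-1)/q))"
    by (rule holder_set[OF q1 S_meas _ \<omega>m N(2) _ gm g0 B Bb]) (use N(1) q in auto)
  moreover have "(\<integral>\<^sup>+ z\<in>S. ennreal (indicator {z. 1 \<le> d c z} z * d c z powr (-1) * \<bar>\<omega> z\<bar>) \<partial>lebesgue)
     = (\<integral>\<^sup>+ z\<in>S. ennreal (g z * \<bar>\<omega> z\<bar>) \<partial>lebesgue)"
    by (intro nn_integral_cong) (auto simp: g_def split: split_indicator)
  ultimately show ?thesis using False by (simp add: B_def q'_def Kq_def)
qed

lemma I_crude:
  assumes ul: "memLp_ul p S d \<omega>" and p: "2 < p" and q: "1 \<le> q" "q < 2" and mq: "memLp q S \<omega>"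
    and c: "c \<in> S"
  shows "(\<integral>\<^sup>+ z\<in>S. ennreal (d c z powr (-1) * \<bar>\<omega> z\<bar>) \<partial>lebesgue)
    \<le> ennreal (ul_norm p S d \<omega> * (36 * D1 (p/(p-1))) powr ((p-1)/p) + Lp_norm q S \<omega> * Kq q)"
proof -
  have m1: "(\<lambda>z. ennreal (indicator {z. d c z < 1} z * d c z powr (-1) * \<bar>\<omega> z\<bar>) * indicator S z) \<in> borel_measurable lebesgue"
  proof -
    have "(\<lambda>z. ennreal (indicator {z. d c z < 1} z * d c z powr (-1) * \<bar>indicator S z *\<^sub>R \<omega> z\<bar>) * indicator S z) \<in> borel_measurable lebesgue"
      using \<omega>m[unfolded set_borel_measurable_def] d_meas[OF c] S_meas by measurable
    then show ?thesis by (rule measurable_cong[THEN iffD1, rotated]) (auto split: split_indicator)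
  qed
  have m2: "(\<lambda>z. ennreal (indicator {z. 1 \<le> d c z} z * d c z powr (-1) * \<bar>\<omega> z\<bar>) * indicator S z) \<in> borel_measurable lebesgue"
  proof -
    have "(\<lambda>z. ennreal (indicator {z. 1 \<le> d c z} z * d c z powr (-1) * \<bar>indicator S z *\<^sub>R \<omega> z\<bar>) * indicator S z) \<in> borel_measurable lebesgue"
      using \<omega>m[unfolded set_borel_measurable_def] d_meas[OF c] S_meas by measurable
    then show ?thesis by (rule measurable_cong[THEN iffD1, rotated]) (auto split: split_indicator)
  qed
  have "(\<integral>\<^sup>+ z\<in>S. ennreal (d c z powr (-1) * \<bar>\<omega> z\<bar>) \<partial>lebesgue)
     = (\<integral>\<^sup>+ z. ennreal (indicator {z. d c z < 1} z * d c z powr (-1) * \<bar>\<omega> z\<bar>) * indicator S z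
          + ennreal (indicator {z. 1 \<le> d c z} z * d c z powr (-1) * \<bar>\<omega> z\<bar>) * indicator S z \<partial>lebesgue)"
    by (intro nn_integral_cong) (auto split: split_indicator)
  also have "\<dots> = (\<integral>\<^sup>+ z\<in>S. ennreal (indicator {z. d c z < 1} z * d c z powr (-1) * \<bar>\<omega> z\<bar>) \<partial>lebesgue)
      + (\<integral>\<^sup>+ z\<in>S. ennreal (indicator {z. 1 \<le> d c z} z * d c z powr (-1) * \<bar>\<omega> z\<bar>) \<partial>lebesgue)"
    by (rule nn_integral_add[OF m1 m2])
  also have "\<dots> \<le> ennreal (ul_norm p S d \<omega> * (36 * D1 (p/(p-1)) * 1 powr (2 - p/(p-1))) powr ((p-1)/p))
      + ennreal (Lp_norm q S \<omega> * Kq q)"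
    by (intro add_mono I_small[OF ul p c] I_far[OF q mq c]) auto
  also have "\<dots> = ennreal (ul_norm p S d \<omega> * (36 * D1 (p/(p-1))) powr ((p-1)/p) + Lp_norm q S \<omega> * Kq q)"
    using ul_bound(2)[OF ul c, of "{}"] p Kq_nonneg[of q] Lp_norm_nonneg[of q S \<omega>]
    by (subst ennreal_plus) auto
  finally show ?thesis .
qed

end

lemma real_pw:
  fixes a b r N n1 n2 C1 C2 :: real
  assumes a: "a > 0" and b: "b > 0" and r: "r > 0"
    and K1a: "n1 \<le> C1 / a" and K1b: "n2 \<le> C1 / b" and tri: "N \<le> n1 + n2"
    and K2: "N \<le> C2 * r / (a * b)"
  shows "N \<le> (2 * \<bar>C1\<bar> * ((if a < 2*r then 1 else 0) * a powr (-1)) + \<bar>C2\<bar> * r * ((if 2*r \<le> a then 1 else 0) * a powr (-2)))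
            + (2 * \<bar>C1\<bar> * ((if b < 2*r then 1 else 0) * b powr (-1)) + \<bar>C2\<bar> * r * ((if 2*r \<le> b then 1 else 0) * b powr (-2)))"
proof -
  have pa1: "a powr (-1) = 1/a" and pb1: "b powr (-1) = 1/b" using a b by (simp_all add: powr_minus divide_inverse)
  have pa2: "a powr (-2) = 1/a^2" and pb2: "b powr (-2) = 1/b^2"
    using a b by (simp_all add: powr_minus divide_inverse powr_numeral)
  have C1a: "C1 / a \<le> \<bar>C1\<bar> / a" "C1 / b \<le> \<bar>C1\<bar> / b" using a b by (simp_all add: divide_right_mono)
  let ?R = "(2 * \<bar>C1\<bar> * ((if a < 2*r then 1 else 0) * (1/a)) + \<bar>C2\<bar> * r * ((if 2*r \<le> a then 1 else 0) * (1/a^2)))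
            + (2 * \<bar>C1\<bar> * ((if b < 2*r then 1 else 0) * (1/b)) + \<bar>C2\<bar> * r * ((if 2*r \<le> b then 1 else 0) * (1/b^2)))"
  have R0: "0 \<le> \<bar>C2\<bar> * r * ((if 2*r \<le> a then 1 else 0) * (1/a^2))" "0 \<le> \<bar>C2\<bar> * r * ((if 2*r \<le> b then 1 else 0) * (1/b^2))"
     "0 \<le> 2 * \<bar>C1\<bar> * ((if a < 2*r then 1 else 0) * (1/a))" "0 \<le> 2 * \<bar>C1\<bar> * ((if b < 2*r then 1 else 0) * (1/b))"
    using a b r by auto
  have "N \<le> ?R"
  proof (cases "a < 2*r \<or> b < 2*r")
    case True
    have A: "\<bar>C1\<bar> / a \<le> \<bar>C1\<bar> * ((if a < 2*r then 1 else 0) * (1/a)) + \<bar>C1\<bar> * ((if b < 2*r then 1 else 0) * (1/b))"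
    proof (cases "a < 2*r")
      case True then show ?thesis using b by simp
    next
      case False
      then have "b < 2*r" using \<open>a < 2*r \<or> b < 2*r\<close> by simp
      then have "1/a \<le> 1/b" using False a b by (simp add: frac_le)
      then have "\<bar>C1\<bar> / a \<le> \<bar>C1\<bar> / b" using mult_left_mono[of "1/a" "1/b" "\<bar>C1\<bar>"] by simp
      then show ?thesis using False \<open>b < 2*r\<close> by simp
    qed
    have B: "\<bar>C1\<bar> / b \<le> \<bar>C1\<bar> * ((if a < 2*r then 1 else 0) * (1/a)) + \<bar>C1\<bar> * ((if b < 2*r then 1 else 0) * (1/b))"
    proof (cases "b < 2*r")
      case True then show ?thesis using a by simp
    next
      case False
      then have "a < 2*r" using \<open>a < 2*r \<or> b < 2*r\<close> by simp
      then have "1/b \<le> 1/a" using False a b by (simp add: frac_le)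
      then have "\<bar>C1\<bar> / b \<le> \<bar>C1\<bar> / a" using mult_left_mono[of "1/b" "1/a" "\<bar>C1\<bar>"] by simp
      then show ?thesis using False \<open>a < 2*r\<close> by simp
    qed
    have "N \<le> \<bar>C1\<bar> / a + \<bar>C1\<bar> / b" using tri K1a K1b C1a by linarith
    with A B R0 show ?thesis by linarith
  next
    case False
    then have ab: "2*r \<le> a" "2*r \<le> b" by auto
    have "1/(a*b) \<le> 1/a^2 + 1/b^2"
    proof (cases "a \<le> b")
      case True
      then have "1/(a*b) \<le> 1/(a*a)" using a b by (intro divide_left_mono mult_left_mono) auto
      moreover have "0 \<le> 1/(b*b)" using b by simp
      ultimately show ?thesis unfolding power2_eq_square by linarith
    next
      case False
      then have "1/(a*b) \<le> 1/(b*b)" using a b by (intro divide_left_mono mult_right_mono) auto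
      moreover have "0 \<le> 1/(a*a)" using a by simp
      ultimately show ?thesis unfolding power2_eq_square by linarith
    qed
    then have "\<bar>C2\<bar> * r * (1/(a*b)) \<le> \<bar>C2\<bar> * r * (1/a^2 + 1/b^2)" using r by (intro mult_left_mono) auto
    moreover have "C2 * r / (a * b) \<le> \<bar>C2\<bar> * r * (1/(a*b))" using a b r by (simp add: divide_right_mono mult_right_mono)
    ultimately have "N \<le> \<bar>C2\<bar> * r * (1/a^2) + \<bar>C2\<bar> * r * (1/b^2)" using K2 by (simp add: algebra_simps)
    then show ?thesis using ab R0 by simp
  qed
  then show ?thesis unfolding pa1 pb1 pa2 pb2 .
qed

lemma D1_bound:
  assumes p: "2 < p" shows "36 * D1 (p/(p-1)) \<le> 720 * max 1 (1/(p-2))"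
proof -
  define p' where "p' = p/(p-1)"
  have p': "1 < p'" "p' < 2" using p by (auto simp: p'_def field_simps)
  have t: "2 - p' > 0" using p' by simp
  have g: "1 / (1 - 2 powr (-(2-p'))) \<le> 1 + 2/(2-p')" by (rule geo_bound[OF t])
  have e: "2/(2-p') = 2 + 2/(p-2)" using p by (simp add: p'_def field_simps)
  have M: "1/(p-2) \<le> max 1 (1/(p-2))" "1 \<le> max 1 (1/(p-2))" by auto
  have tw: "2 powr p' \<le> (4::real)"
    using powr_mono[of p' 2 "2::real"] p' by simp
  have pos: "1 - 2 powr (-(2-p')) > 0" using powr_less_mono[of "-(2-p')" 0 "2::real"] t by simp
  have "D1 p' = 2 powr p' * (1 / (1 - 2 powr (-(2-p'))))" by (simp add: D1_def)
  also have "\<dots> \<le> 4 * (1 + 2/(2-p'))"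
    using tw g pos by (intro mult_mono) auto
  finally have "D1 p' \<le> 4 * (3 + 2/(p-2))" unfolding e by simp
  then have "36 * D1 p' \<le> 36 * (4 * (3 + 2/(p-2)))" by simp
  also have "\<dots> \<le> 720 * max 1 (1/(p-2))" using M by simp
  finally show ?thesis by (simp add: p'_def)
qed

lemma D2_bound:
  assumes p: "2 < p" shows "36 * D2 (2 * (p/(p-1))) \<le> 144 * p"
proof -
  define p' where "p' = p/(p-1)"
  have p': "1 < p'" using p by (auto simp: p'_def field_simps)
  have t: "2*p' - 2 > 0" using p' by simp
  have g: "1 / (1 - 2 powr (-(2*p'-2))) \<le> 1 + 2/(2*p'-2)" by (rule geo_bound[OF t])
  have e: "2/(2*p'-2) = p - 1" using p by (simp add: p'_def field_simps)
  have "D2 (2*p') = 4 * (1 / (1 - 2 powr (-(2*p'-2))))" by (simp add: D2_def)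
  also have "\<dots> \<le> 4 * (1 + 2/(2*p'-2))" using g by simp
  finally have "D2 (2*p') \<le> 4 * p" unfolding e by simp
  then show ?thesis by (simp add: p'_def)
qed

lemma K1_bound:
  assumes p: "2 < p" and r: "0 < r"
  shows "(36 * D1 (p/(p-1)) * (2*r) powr (2 - p/(p-1))) powr ((p-1)/p)
    \<le> 1442 * max 1 (1/(p-2)) * r powr (1 - 2/p)"
proof -
  define p' where "p' = p/(p-1)"
  have p': "1 < p'" "p' < 2" using p by (auto simp: p'_def field_simps)
  define X where "X = 36 * D1 p'"
  have X0: "X \<ge> 0" using D1_pos[of p'] p' by (simp add: X_def)
  define \<theta> where "\<theta> = (p-1)/p"
  have th: "0 \<le> \<theta>" "\<theta> \<le> 1" using p by (auto simp: \<theta>_def)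
  have ex: "(2 - p') * \<theta> = 1 - 2/p" using p by (simp add: p'_def \<theta>_def field_simps)
  have e1: "1 - 2/p \<le> 1" using p by simp
  have "(X * (2*r) powr (2 - p')) powr \<theta> = X powr \<theta> * ((2*r) powr (2-p')) powr \<theta>"
    using X0 by (simp add: powr_mult)
  also have "((2*r) powr (2-p')) powr \<theta> = (2*r) powr (1 - 2/p)" by (simp add: powr_powr ex)
  also have "\<dots> = 2 powr (1 - 2/p) * r powr (1 - 2/p)" using r by (simp add: powr_mult)
  also have "X powr \<theta> * (2 powr (1 - 2/p) * r powr (1 - 2/p)) \<le> (721 * max 1 (1/(p-2))) * (2 * r powr (1 - 2/p))"
  proof (rule mult_mono)
    have "X powr \<theta> \<le> 1 + X" by (rule powr_le_1plus[OF X0 th])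
    also have "\<dots> \<le> 721 * max 1 (1/(p-2))" using D1_bound[OF p] unfolding X_def p'_def by simp
    finally show "X powr \<theta> \<le> 721 * max 1 (1/(p-2))" .
    have "2 powr (1 - 2/p) \<le> (2::real) powr 1" using e1 by (intro powr_mono) auto
    then show "2 powr (1 - 2/p) * r powr (1 - 2/p) \<le> 2 * r powr (1 - 2/p)"
      by (intro mult_right_mono) auto
  qed auto
  finally show ?thesis by (simp add: X_def p'_def \<theta>_def)
qed

lemma K1c_bound:
  assumes p: "2 < p"
  shows "(36 * D1 (p/(p-1))) powr ((p-1)/p) \<le> 721 * max 1 (1/(p-2))"
proof -
  have X0: "36 * D1 (p/(p-1)) \<ge> 0" using D1_pos[of "p/(p-1)"] p by (auto simp: field_simps)
  have "(36 * D1 (p/(p-1))) powr ((p-1)/p) \<le> 1 + 36 * D1 (p/(p-1))"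
    by (rule powr_le_1plus[OF X0]) (use p in auto)
  also have "\<dots> \<le> 721 * max 1 (1/(p-2))" using D1_bound[OF p] by simp
  finally show ?thesis .
qed

lemma K2_bound:
  assumes p: "2 < p" and r: "0 < r"
  shows "r * (36 * D2 (2*(p/(p-1))) * (2*r) powr (2 - 2*(p/(p-1)))) powr ((p-1)/p)
    \<le> 145 * p * r powr (1 - 2/p)"
proof -
  define p' where "p' = p/(p-1)"
  have p': "1 < p'" using p by (auto simp: p'_def field_simps)
  define X where "X = 36 * D2 (2*p')"
  have X0: "X \<ge> 0" using D2_pos[of "2*p'"] p' by (simp add: X_def)
  define \<theta> where "\<theta> = (p-1)/p"
  have th: "0 \<le> \<theta>" "\<theta> \<le> 1" using p by (auto simp: \<theta>_def)
  have ex: "(2 - 2*p') * \<theta> = -(2/p)" using p by (simp add: p'_def \<theta>_def field_simps)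
  have "(X * (2*r) powr (2 - 2*p')) powr \<theta> = X powr \<theta> * ((2*r) powr (2-2*p')) powr \<theta>"
    using X0 by (simp add: powr_mult)
  also have "((2*r) powr (2-2*p')) powr \<theta> = (2*r) powr (-(2/p))" by (simp add: powr_powr ex)
  also have "X powr \<theta> * (2*r) powr (-(2/p)) \<le> (145 * p) * r powr (-(2/p))"
  proof (intro mult_mono)
    have "X powr \<theta> \<le> 1 + X" by (rule powr_le_1plus[OF X0 th])
    also have "\<dots> \<le> 145 * p" using D2_bound[OF p] p unfolding X_def p'_def by simp
    finally show "X powr \<theta> \<le> 145 * p" .
    show "(2*r) powr (-(2/p)) \<le> r powr (-(2/p))" by (rule powr_mono2') (use p r in auto)
  qed (use p in auto)
  finally have "(X * (2*r) powr (2 - 2*p')) powr \<theta> \<le> 145 * p * r powr (-(2/p))" .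
  then have "r * (X * (2*r) powr (2 - 2*p')) powr \<theta> \<le> r * (145 * p * r powr (-(2/p)))"
    using r by (intro mult_left_mono) auto
  also have "r * (145 * p * r powr (-(2/p))) = 145 * p * (r * r powr (-(2/p)))" by (simp only: mult_ac)
  also have "r * r powr (-(2/p)) = r powr (1 - 2/p)"
  proof -
    have "r powr (1 + -(2/p)) = r powr 1 * r powr (-(2/p))" by (rule powr_add)
    then show ?thesis using r by simp
  qed
  finally show ?thesis by (simp add: X_def p'_def \<theta>_def)
qed




lemma nn3:
  fixes h f1 f2 f3 :: "'a \<Rightarrow> real"
  assumes m1: "(\<lambda>z. ennreal (f1 z) * indicator S z) \<in> borel_measurable M"
    and m2: "(\<lambda>z. ennreal (f2 z) * indicator S z) \<in> borel_measurable M"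
    and m3: "(\<lambda>z. ennreal (f3 z) * indicator S z) \<in> borel_measurable M"
    and co: "\<alpha> \<ge> 0" "\<beta> \<ge> 0" "\<gamma> \<ge> 0"
    and f0: "\<And>z. f1 z \<ge> 0" "\<And>z. f2 z \<ge> 0" "\<And>z. f3 z \<ge> 0"
    and pw: "\<And>z. z \<in> S \<Longrightarrow> h z \<le> \<alpha> * f1 z + \<beta> * f2 z + \<gamma> * f3 z"
  shows "(\<integral>\<^sup>+ z\<in>S. ennreal (h z) \<partial>M) \<le> ennreal \<alpha> * (\<integral>\<^sup>+ z\<in>S. ennreal (f1 z) \<partial>M)
     + ennreal \<beta> * (\<integral>\<^sup>+ z\<in>S. ennreal (f2 z) \<partial>M) + ennreal \<gamma> * (\<integral>\<^sup>+ z\<in>S. ennreal (f3 z) \<partial>M)"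
proof -
  have "(\<integral>\<^sup>+ z\<in>S. ennreal (h z) \<partial>M) \<le> (\<integral>\<^sup>+ z. (ennreal \<alpha> * (ennreal (f1 z) * indicator S z)
      + ennreal \<beta> * (ennreal (f2 z) * indicator S z)) + ennreal \<gamma> * (ennreal (f3 z) * indicator S z) \<partial>M)"
  proof (intro nn_integral_mono)
    fix z
    show "ennreal (h z) * indicator S z \<le> (ennreal \<alpha> * (ennreal (f1 z) * indicator S z)
      + ennreal \<beta> * (ennreal (f2 z) * indicator S z)) + ennreal \<gamma> * (ennreal (f3 z) * indicator S z)"
    proof (cases "z \<in> S")
      case True
      have "ennreal (h z) \<le> ennreal (\<alpha> * f1 z + \<beta> * f2 z + \<gamma> * f3 z)" by (rule ennreal_leI[OF pw[OF True]])
      also have "\<dots> = ennreal \<alpha> * ennreal (f1 z) + ennreal \<beta> * ennreal (f2 z) + ennreal \<gamma> * ennreal (f3 z)"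
        using co f0 by (simp add: ennreal_plus ennreal_mult)
      finally show ?thesis using True by simp
    qed simp
  qed
  also have "\<dots> = (\<integral>\<^sup>+ z. ennreal \<alpha> * (ennreal (f1 z) * indicator S z)
      + ennreal \<beta> * (ennreal (f2 z) * indicator S z) \<partial>M) + (\<integral>\<^sup>+ z. ennreal \<gamma> * (ennreal (f3 z) * indicator S z) \<partial>M)"
    by (rule nn_integral_add) (use m1 m2 m3 in auto)
  also have "(\<integral>\<^sup>+ z. ennreal \<alpha> * (ennreal (f1 z) * indicator S z)
      + ennreal \<beta> * (ennreal (f2 z) * indicator S z) \<partial>M) = (\<integral>\<^sup>+ z. ennreal \<alpha> * (ennreal (f1 z) * indicator S z) \<partial>M)
      + (\<integral>\<^sup>+ z. ennreal \<beta> * (ennreal (f2 z) * indicator S z) \<partial>M)"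
    by (rule nn_integral_add) (use m1 m2 in auto)
  also have "(\<integral>\<^sup>+ z. ennreal \<alpha> * (ennreal (f1 z) * indicator S z) \<partial>M) = ennreal \<alpha> * (\<integral>\<^sup>+ z\<in>S. ennreal (f1 z) \<partial>M)"
    by (rule nn_integral_cmult[OF m1])
  also have "(\<integral>\<^sup>+ z. ennreal \<beta> * (ennreal (f2 z) * indicator S z) \<partial>M) = ennreal \<beta> * (\<integral>\<^sup>+ z\<in>S. ennreal (f2 z) \<partial>M)"
    by (rule nn_integral_cmult[OF m2])
  also have "(\<integral>\<^sup>+ z. ennreal \<gamma> * (ennreal (f3 z) * indicator S z) \<partial>M) = ennreal \<gamma> * (\<integral>\<^sup>+ z\<in>S. ennreal (f3 z) \<partial>M)"
    by (rule nn_integral_cmult[OF m3])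
  finally show ?thesis .
qed

definition Pf :: "real \<Rightarrow> real \<Rightarrow> real \<Rightarrow> real \<Rightarrow> real" where
  "Pf C1 C2 r t = 2*\<bar>C1\<bar>*((if t < 2*r then 1 else 0) * t powr (-1)) + \<bar>C2\<bar>*r*((if 2*r \<le> t then 1 else 0) * t powr (-2))"

context ctx begin

lemma meas_gen:
  assumes "f \<in> borel_measurable lebesgue"
  shows "(\<lambda>z. ennreal (f z * \<bar>\<omega> z\<bar>) * indicator S z) \<in> borel_measurable lebesgue"
proof -
  have "(\<lambda>z. ennreal (f z * \<bar>indicator S z *\<^sub>R \<omega> z\<bar>) * indicator S z) \<in> borel_measurable lebesgue"
    using \<omega>m[unfolded set_borel_measurable_def] assms S_meas by measurable
  then show ?thesis by (rule measurable_cong[THEN iffD1, rotated]) (auto split: split_indicator)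
qed

end
lemma le_mult1: "0 \<le> (x::real) \<Longrightarrow> 1 \<le> c \<Longrightarrow> x \<le> c * x"
  using mult_right_mono[of 1 c x] by simp
lemma aux:
  assumes "0 \<le> (U::real)" "0 \<le> N" "1 \<le> M" "1 \<le> p" "0 \<le> R"
  shows "U*M*R \<le> M*p*(U+N)*R" "U*p*R \<le> M*p*(U+N)*R" "N*R \<le> M*p*(U+N)*R"
proof -
  have Y: "0 \<le> (U+N)*R" using assms by simp
  have Mp: "1 \<le> M*p" using assms mult_mono[of 1 M 1 p] by simp
  have "U*R \<le> (U+N)*R" using assms by (intro mult_right_mono) auto
  have UR: "0 \<le> U*R" using assms by simp
  have NR: "N*R \<le> (U+N)*R" using assms by (intro mult_right_mono) auto
  have "(U+N)*R \<le> (M*p)*((U+N)*R)" by (rule le_mult1[OF Y Mp])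
  then have main: "(U+N)*R \<le> M*p*(U+N)*R" by (simp add: mult_ac)
  have "U*M*R = M*(U*R)" by (simp add: mult_ac)
  also have "\<dots> \<le> M*((U+N)*R)" using assms \<open>U*R \<le> (U+N)*R\<close> by (intro mult_left_mono) auto
  also have "\<dots> \<le> M*(p*((U+N)*R))" using assms Y le_mult1[OF Y, of p] by (intro mult_left_mono) auto
  finally show "U*M*R \<le> M*p*(U+N)*R" by (simp add: mult_ac)
  have "U*p*R = p*(U*R)" by (simp add: mult_ac)
  also have "\<dots> \<le> p*((U+N)*R)" using assms \<open>U*R \<le> (U+N)*R\<close> by (intro mult_left_mono) auto
  also have "\<dots> \<le> M*(p*((U+N)*R))" using assms Y by (intro le_mult1) auto
  finally show "U*p*R \<le> M*p*(U+N)*R" by (simp add: mult_ac)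
  show "N*R \<le> M*p*(U+N)*R" using NR main by linarith
qed

lemma pf_split:
  assumes t: "0 \<le> (t::real)" and r: "0 < r" "2*r \<le> 1"
  shows "Pf C1 C2 r t \<le> 2*\<bar>C1\<bar> * (indicator {x. x < 2*r} t * t powr (-1))
     + \<bar>C2\<bar>*r * (indicator {x. 2*r \<le> x} t * indicator {x. x < 1} t * t powr (-2))
     + \<bar>C2\<bar>*r * (indicator {x. 1 \<le> x} t * t powr (-1))"
proof -
  have "(if 2*r \<le> t then 1 else 0) * t powr (-2) \<le> indicator {x. 2*r \<le> x} t * indicator {x. x < 1} t * t powr (-2)
        + indicator {x. 1 \<le> x} t * t powr (-1)"
  proof (cases "2*r \<le> t")
    case True
    show ?thesis
    proof (cases "t < 1")
      case True with \<open>2*r \<le> t\<close> show ?thesis by simp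
    next
      case False
      then have "t powr (-2) \<le> t powr (-1)" by (intro powr_mono) auto
      with False True show ?thesis by simp
    qed
  qed (auto simp: indicator_def)
  then have "\<bar>C2\<bar>*r*((if 2*r \<le> t then 1 else 0) * t powr (-2)) \<le> \<bar>C2\<bar>*r * (indicator {x. 2*r \<le> x} t * indicator {x. x < 1} t * t powr (-2)
        + indicator {x. 1 \<le> x} t * t powr (-1))" using r by (intro mult_left_mono) auto
  moreover have eq: "(if t < 2*r then 1 else 0) = indicator {x. x < 2*r} t" by (simp add: indicator_def)
  ultimately show ?thesis unfolding Pf_def eq distrib_left by linarith
qed

lemma pf_large:
  assumes t: "0 \<le> (t::real)" and r: "1/2 < r"
  shows "Pf C1 C2 r t \<le> (2*\<bar>C1\<bar> + \<bar>C2\<bar>) * t powr (-1)"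
proof -
  have a: "(if t < 2*r then 1 else 0) * t powr (-1) \<le> t powr (-1)" by simp
  have b: "r*((if 2*r \<le> t then 1 else 0) * t powr (-2)) \<le> t powr (-1)"
  proof (cases "2*r \<le> t")
    case True
    then have tp: "t > 0" using r by simp
    have "r * t powr (-2) = r / t^2" using tp by (simp add: powr_minus divide_inverse powr_numeral)
    also have "\<dots> \<le> (t/2) / t^2" using True tp by (intro divide_right_mono) auto
    also have "\<dots> \<le> 1/t" using tp by (simp add: power2_eq_square field_simps)
    also have "1/t = t powr (-1)" using tp by (simp add: powr_minus divide_inverse)
    finally show ?thesis using True by simp
  qed simp
  have "2*\<bar>C1\<bar>*((if t < 2*r then 1 else 0) * t powr (-1)) \<le> 2*\<bar>C1\<bar>*t powr (-1)"
    using a by (intro mult_left_mono) auto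
  moreover have "\<bar>C2\<bar>*(r*((if 2*r \<le> t then 1 else 0) * t powr (-2))) \<le> \<bar>C2\<bar>*t powr (-1)"
    using b by (intro mult_left_mono) auto
  ultimately show ?thesis unfolding Pf_def by (simp add: algebra_simps)
qed

context ctx begin

lemma cb_small:
  assumes ul: "memLp_ul p S d \<omega>" and p: "2 < p" and q: "1 \<le> q" "q < 2" and mq: "memLp q S \<omega>"
    and c: "c \<in> S" and r: "0 < r" "r \<le> 1/2"
  shows "(\<integral>\<^sup>+ z\<in>S. ennreal (Pf C1 C2 r (d c z) * \<bar>\<omega> z\<bar>) \<partial>lebesgue)
    \<le> ennreal ((2884*\<bar>C1\<bar> + 145*\<bar>C2\<bar> + \<bar>C2\<bar> * Kq q) * (max 1 (1/(p-2)) * p * (ul_norm p S d \<omega> + Lp_norm q S \<omega>) * r powr (1-2/p)))"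
proof -
  define U where "U = ul_norm p S d \<omega>"
  define N where "N = Lp_norm q S \<omega>"
  define M where "M = max 1 (1/(p-2))"
  define R where "R = r powr (1-2/p)"
  have U0: "U \<ge> 0" unfolding U_def using ul_bound(2)[OF ul c _, of "{}"] p by simp
  have N0: "N \<ge> 0" unfolding N_def by (rule Lp_norm_nonneg)
  have M1: "M \<ge> 1" by (simp add: M_def)
  have R0: "R \<ge> 0" by (simp add: R_def)
  define T1 where "T1 = (36 * D1 (p/(p-1)) * (2*r) powr (2 - p/(p-1))) powr ((p-1)/p)"
  define T2 where "T2 = (36 * D2 (2*(p/(p-1))) * (2*r) powr (2 - 2*(p/(p-1)))) powr ((p-1)/p)"
  have T10: "T1 \<ge> 0" "T2 \<ge> 0" by (simp_all add: T1_def T2_def)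
  define f1 where "f1 z = indicator {z. d c z < 2*r} z * d c z powr (-1) * \<bar>\<omega> z\<bar>" for z
  define f2 where "f2 z = indicator {z. 2*r \<le> d c z} z * indicator {z. d c z < 1} z * d c z powr (-2) * \<bar>\<omega> z\<bar>" for z
  define f3 where "f3 z = indicator {z. 1 \<le> d c z} z * d c z powr (-1) * \<bar>\<omega> z\<bar>" for z
  have dm: "d c \<in> borel_measurable lebesgue" by (rule d_meas[OF c])
  have m1: "(\<lambda>z. ennreal (f1 z) * indicator S z) \<in> borel_measurable lebesgue"
    unfolding f1_def by (rule meas_gen) (use dm in measurable)
  have m2: "(\<lambda>z. ennreal (f2 z) * indicator S z) \<in> borel_measurable lebesgue"
    unfolding f2_def by (rule meas_gen) (use dm in measurable)
  have m3: "(\<lambda>z. ennreal (f3 z) * indicator S z) \<in> borel_measurable lebesgue"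
    unfolding f3_def by (rule meas_gen) (use dm in measurable)
  have "(\<integral>\<^sup>+ z\<in>S. ennreal (Pf C1 C2 r (d c z) * \<bar>\<omega> z\<bar>) \<partial>lebesgue)
     \<le> ennreal (2*\<bar>C1\<bar>) * (\<integral>\<^sup>+ z\<in>S. ennreal (f1 z) \<partial>lebesgue)
       + ennreal (\<bar>C2\<bar>*r) * (\<integral>\<^sup>+ z\<in>S. ennreal (f2 z) \<partial>lebesgue)
       + ennreal (\<bar>C2\<bar>*r) * (\<integral>\<^sup>+ z\<in>S. ennreal (f3 z) \<partial>lebesgue)"
  proof (rule nn3[OF m1 m2 m3])
    show "0 \<le> 2*\<bar>C1\<bar>" "0 \<le> \<bar>C2\<bar>*r" "0 \<le> \<bar>C2\<bar>*r" using r by auto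
    show "0 \<le> f1 z" "0 \<le> f2 z" "0 \<le> f3 z" for z by (simp_all add: f1_def f2_def f3_def)
    fix z assume "z \<in> S"
    have "Pf C1 C2 r (d c z) * \<bar>\<omega> z\<bar> \<le> (2*\<bar>C1\<bar> * (indicator {x. x < 2*r} (d c z) * d c z powr (-1))
     + \<bar>C2\<bar>*r * (indicator {x. 2*r \<le> x} (d c z) * indicator {x. x < 1} (d c z) * d c z powr (-2))
     + \<bar>C2\<bar>*r * (indicator {x. 1 \<le> x} (d c z) * d c z powr (-1))) * \<bar>\<omega> z\<bar>"
      by (intro mult_right_mono pf_split d0[OF c]) (use r in auto)
    then show "Pf C1 C2 r (d c z) * \<bar>\<omega> z\<bar> \<le> 2*\<bar>C1\<bar> * f1 z + \<bar>C2\<bar>*r * f2 z + \<bar>C2\<bar>*r * f3 z"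
      by (simp add: f1_def f2_def f3_def indicator_def algebra_simps)
  qed
  also have "\<dots> \<le> ennreal (2*\<bar>C1\<bar>) * ennreal (U * T1) + ennreal (\<bar>C2\<bar>*r) * ennreal (U * T2)
       + ennreal (\<bar>C2\<bar>*r) * ennreal (N * Kq q)"
  proof (intro add_mono mult_left_mono)
    show "(\<integral>\<^sup>+ z\<in>S. ennreal (f1 z) \<partial>lebesgue) \<le> ennreal (U * T1)"
      unfolding f1_def U_def T1_def by (rule I_small[OF ul p c]) (use r in auto)
    show "(\<integral>\<^sup>+ z\<in>S. ennreal (f2 z) \<partial>lebesgue) \<le> ennreal (U * T2)"
      unfolding f2_def U_def T2_def by (rule I_mid[OF ul p c]) (use r in auto)
    show "(\<integral>\<^sup>+ z\<in>S. ennreal (f3 z) \<partial>lebesgue) \<le> ennreal (N * Kq q)"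
      unfolding f3_def N_def by (rule I_far[OF q mq c])
  qed auto
  also have "\<dots> = ennreal (2*\<bar>C1\<bar> * (U * T1) + \<bar>C2\<bar>*r * (U * T2) + \<bar>C2\<bar>*r * (N * Kq q))"
    using U0 N0 T10 r Kq_nonneg[of q] by (simp add: ennreal_plus ennreal_mult)
  also have "\<dots> \<le> ennreal ((2884*\<bar>C1\<bar> + 145*\<bar>C2\<bar> + \<bar>C2\<bar> * Kq q) * (M * p * (U + N) * R))"
  proof (rule ennreal_leI)
    have t1: "T1 \<le> 1442 * M * R" unfolding T1_def M_def R_def by (rule K1_bound[OF p r(1)])
    have t2: "r * T2 \<le> 145 * p * R" unfolding T2_def R_def by (rule K2_bound[OF p r(1)])
    have rR: "r \<le> R" unfolding R_def
    proof -
      have "r powr 1 \<le> r powr (1 - 2/p)" by (rule powr_mono') (use r p in auto)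
      then show "r \<le> r powr (1 - 2/p)" using r by simp
    qed
    note A = aux[OF U0 N0 M1 _ R0] 
    have p1: "1 \<le> p" using p by simp
    have "2*\<bar>C1\<bar> * (U * T1) \<le> 2*\<bar>C1\<bar> * (U * (1442 * M * R))"
      using t1 U0 by (intro mult_left_mono) auto
    also have "\<dots> = 2884*\<bar>C1\<bar> * (U*M*R)" by (simp add: mult_ac)
    also have "\<dots> \<le> 2884*\<bar>C1\<bar> * (M * p * (U + N) * R)" using A(1)[OF p1] by (intro mult_left_mono) auto
    finally have a1: "2*\<bar>C1\<bar> * (U * T1) \<le> 2884*\<bar>C1\<bar> * (M * p * (U + N) * R)" .
    have "\<bar>C2\<bar>*r * (U * T2) = \<bar>C2\<bar> * U * (r * T2)" by (simp add: mult_ac)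
    also have "\<dots> \<le> \<bar>C2\<bar> * U * (145 * p * R)" using t2 U0 by (intro mult_left_mono) auto
    also have "\<dots> = 145*\<bar>C2\<bar> * (U*p*R)" by (simp add: mult_ac)
    also have "\<dots> \<le> 145*\<bar>C2\<bar> * (M * p * (U + N) * R)" using A(2)[OF p1] by (intro mult_left_mono) auto
    finally have a2: "\<bar>C2\<bar>*r * (U * T2) \<le> 145*\<bar>C2\<bar> * (M * p * (U + N) * R)" .
    have "\<bar>C2\<bar>*r * (N * Kq q) = \<bar>C2\<bar> * Kq q * (N * r)" by (simp add: mult_ac)
    also have "\<dots> \<le> \<bar>C2\<bar> * Kq q * (N * R)" using rR N0 Kq_nonneg[of q]
      by (intro mult_left_mono) auto
    also have "\<dots> \<le> \<bar>C2\<bar> * Kq q * (M * p * (U + N) * R)" using A(3)[OF p1] Kq_nonneg[of q]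
      by (intro mult_left_mono) auto
    finally have a3: "\<bar>C2\<bar>*r * (N * Kq q) \<le> \<bar>C2\<bar> * Kq q * (M * p * (U + N) * R)" .
    show "2*\<bar>C1\<bar> * (U * T1) + \<bar>C2\<bar>*r * (U * T2) + \<bar>C2\<bar>*r * (N * Kq q)
        \<le> (2884*\<bar>C1\<bar> + 145*\<bar>C2\<bar> + \<bar>C2\<bar> * Kq q) * (M * p * (U + N) * R)"
      using a1 a2 a3 by (simp add: algebra_simps)
  qed
  finally show ?thesis by (simp add: U_def N_def M_def R_def mult_ac)
qed

lemma cb_large:
  assumes ul: "memLp_ul p S d \<omega>" and p: "2 < p" and q: "1 \<le> q" "q < 2" and mq: "memLp q S \<omega>"
    and c: "c \<in> S" and r: "1/2 < r"
  shows "(\<integral>\<^sup>+ z\<in>S. ennreal (Pf C1 C2 r (d c z) * \<bar>\<omega> z\<bar>) \<partial>lebesgue)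
    \<le> ennreal ((2*\<bar>C1\<bar> + \<bar>C2\<bar>) * (721 + Kq q) * (max 1 (1/(p-2)) * (ul_norm p S d \<omega> + Lp_norm q S \<omega>)))"
proof -
  define U where "U = ul_norm p S d \<omega>"
  define N where "N = Lp_norm q S \<omega>"
  define M where "M = max 1 (1/(p-2))"
  have U0: "U \<ge> 0" unfolding U_def using ul_bound(2)[OF ul c _, of "{}"] p by simp
  have N0: "N \<ge> 0" unfolding N_def by (rule Lp_norm_nonneg)
  have M1: "M \<ge> 1" by (simp add: M_def)
  have dm: "d c \<in> borel_measurable lebesgue" by (rule d_meas[OF c])
  have m: "(\<lambda>z. ennreal (d c z powr (-1) * \<bar>\<omega> z\<bar>) * indicator S z) \<in> borel_measurable lebesgue"
    by (rule meas_gen) (use dm in measurable)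
  have "(\<integral>\<^sup>+ z\<in>S. ennreal (Pf C1 C2 r (d c z) * \<bar>\<omega> z\<bar>) \<partial>lebesgue)
     \<le> (\<integral>\<^sup>+ z. ennreal (2*\<bar>C1\<bar> + \<bar>C2\<bar>) * (ennreal (d c z powr (-1) * \<bar>\<omega> z\<bar>) * indicator S z) \<partial>lebesgue)"
  proof (intro nn_integral_mono)
    fix z
    have "Pf C1 C2 r (d c z) * \<bar>\<omega> z\<bar> \<le> (2*\<bar>C1\<bar> + \<bar>C2\<bar>) * d c z powr (-1) * \<bar>\<omega> z\<bar>"
      by (intro mult_right_mono pf_large d0[OF c] r) auto
    then have "ennreal (Pf C1 C2 r (d c z) * \<bar>\<omega> z\<bar>) \<le> ennreal (2*\<bar>C1\<bar> + \<bar>C2\<bar>) * ennreal (d c z powr (-1) * \<bar>\<omega> z\<bar>)"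
      by (subst ennreal_mult[symmetric]) (auto intro!: ennreal_leI simp: mult_ac)
    then show "ennreal (Pf C1 C2 r (d c z) * \<bar>\<omega> z\<bar>) * indicator S z
      \<le> ennreal (2*\<bar>C1\<bar> + \<bar>C2\<bar>) * (ennreal (d c z powr (-1) * \<bar>\<omega> z\<bar>) * indicator S z)"
      by (auto split: split_indicator)
  qed
  also have "\<dots> = ennreal (2*\<bar>C1\<bar> + \<bar>C2\<bar>) * (\<integral>\<^sup>+ z\<in>S. ennreal (d c z powr (-1) * \<bar>\<omega> z\<bar>) \<partial>lebesgue)"
    by (rule nn_integral_cmult[OF m])
  also have "\<dots> \<le> ennreal (2*\<bar>C1\<bar> + \<bar>C2\<bar>) * ennreal (U * (36 * D1 (p/(p-1))) powr ((p-1)/p) + N * Kq q)"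
    unfolding U_def N_def by (intro mult_left_mono I_crude[OF ul p q mq c]) auto
  also have "\<dots> = ennreal ((2*\<bar>C1\<bar> + \<bar>C2\<bar>) * (U * (36 * D1 (p/(p-1))) powr ((p-1)/p) + N * Kq q))"
    by (rule ennreal_mult[symmetric]) (use U0 N0 Kq_nonneg[of q] in auto)
  also have "\<dots> \<le> ennreal ((2*\<bar>C1\<bar> + \<bar>C2\<bar>) * (721 + Kq q) * (M * (U + N)))"
  proof (rule ennreal_leI)
    have k: "(36 * D1 (p/(p-1))) powr ((p-1)/p) \<le> 721 * M" unfolding M_def by (rule K1c_bound[OF p])
    have "U * (36 * D1 (p/(p-1))) powr ((p-1)/p) \<le> U * (721 * M)" using k U0 by (intro mult_left_mono) auto
    also have "\<dots> \<le> 721 * (M * (U + N))" using U0 N0 M1 by (simp add: algebra_simps)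
    finally have b1: "U * (36 * D1 (p/(p-1))) powr ((p-1)/p) \<le> 721 * (M * (U + N))" .
    have "N * Kq q \<le> Kq q * (M * (U + N))"
    proof -
      have "N \<le> M * (U + N)" using U0 N0 M1 le_mult1[of "U+N" M] by simp
      then have "Kq q * N \<le> Kq q * (M * (U + N))" using Kq_nonneg[of q] by (rule mult_left_mono)
      then show ?thesis by (simp add: mult.commute)
    qed
    then have "U * (36 * D1 (p/(p-1))) powr ((p-1)/p) + N * Kq q \<le> (721 + Kq q) * (M * (U + N))"
      using b1 by (simp add: algebra_simps)
    then show "(2*\<bar>C1\<bar> + \<bar>C2\<bar>) * (U * (36 * D1 (p/(p-1))) powr ((p-1)/p) + N * Kq q) \<le> (2*\<bar>C1\<bar> + \<bar>C2\<bar>) * (721 + Kq q) * (M * (U + N))"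
      by (simp add: mult_left_mono mult.assoc)
  qed
  finally show ?thesis by (simp add: U_def N_def M_def)
qed

end
lemma Pf_nonneg: "0 \<le> t \<Longrightarrow> 0 < r \<Longrightarrow> 0 \<le> Pf C1 C2 r t"
  unfolding Pf_def by (intro add_nonneg_nonneg mult_nonneg_nonneg) auto

lemma kernel_pw:
  assumes K: "kernel_K1K2 S d k C1 C2" and xyz: "x \<in> S" "y \<in> S" "z \<in> S" "z \<noteq> x" "z \<noteq> y"
    and r: "d x y > 0" and a0: "d x z \<ge> 0" and b0: "d y z \<ge> 0"
  shows "norm (k x z - k y z) \<le> Pf C1 C2 (d x y) (d x z) + Pf C1 C2 (d x y) (d y z)"
proof -
  have K2: "norm (k x z - k y z) \<le> C2 * d x y / (d x z * d y z)"
    using K xyz unfolding kernel_K1K2_def by blast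
  show ?thesis
  proof (cases "d x z = 0 \<or> d y z = 0")
    case True
    then have "norm (k x z - k y z) \<le> 0" using K2 by auto
    moreover have "0 \<le> Pf C1 C2 (d x y) (d x z) + Pf C1 C2 (d x y) (d y z)"
      using Pf_nonneg a0 b0 r by (simp add: add_nonneg_nonneg)
    ultimately show ?thesis by linarith
  next
    case False
    then have a: "d x z > 0" and b: "d y z > 0" using a0 b0 by auto
    have K1a: "norm (k x z) \<le> C1 / d x z" using K xyz unfolding kernel_K1K2_def by (metis)
    have K1b: "norm (k y z) \<le> C1 / d y z" using K xyz unfolding kernel_K1K2_def by (metis)
    show ?thesis unfolding Pf_def
      by (rule real_pw[OF a b r K1a K1b norm_triangle_ineq4 K2])
  qed
qed

lemma ae_ne: "AE z in lebesgue. z \<noteq> (c::pt)" by (rule AE_completion[OF AE_lborel_singleton])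

definition Kt :: "real \<Rightarrow> real \<Rightarrow> real \<Rightarrow> real" where
  "Kt C1 C2 q = 2884*\<bar>C1\<bar> + 145*\<bar>C2\<bar> + \<bar>C2\<bar> * Kq q + (2*\<bar>C1\<bar> + \<bar>C2\<bar>) * (721 + Kq q) + 1"

lemma Kt_props: "Kt C1 C2 q > 0" "2884*\<bar>C1\<bar> + 145*\<bar>C2\<bar> + \<bar>C2\<bar> * Kq q \<le> Kt C1 C2 q"
  "(2*\<bar>C1\<bar> + \<bar>C2\<bar>) * (721 + Kq q) \<le> Kt C1 C2 q"
proof -
  have "0 \<le> \<bar>C2\<bar> * Kq q" "0 \<le> (2*\<bar>C1\<bar> + \<bar>C2\<bar>) * (721 + Kq q)" using Kq_nonneg[of q] by auto
  then show "Kt C1 C2 q > 0" "2884*\<bar>C1\<bar> + 145*\<bar>C2\<bar> + \<bar>C2\<bar> * Kq q \<le> Kt C1 C2 q"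
    "(2*\<bar>C1\<bar> + \<bar>C2\<bar>) * (721 + Kq q) \<le> Kt C1 C2 q" unfolding Kt_def by auto
qed

context ctx begin

lemma lhs_zero:
  assumes K: "kernel_K1K2 S d k C1 C2" and x: "x \<in> S" and y: "y \<in> S" and xy: "x = y \<or> d x y = 0"
  shows "(\<integral>\<^sup>+ z\<in>S. ennreal (norm (k x z - k y z) * \<bar>\<omega> z\<bar>) \<partial>lebesgue) = 0"
proof -
  have ae: "AE z in lebesgue. ennreal (norm (k x z - k y z) * \<bar>\<omega> z\<bar>) * indicator S z = 0"
  proof -
    show "AE z in lebesgue. ennreal (norm (k x z - k y z) * \<bar>\<omega> z\<bar>) * indicator S z = 0"
      using ae_ne[of x] ae_ne[of y]
    proof eventually_elim
      case (elim z)
      show ?case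
      proof (cases "z \<in> S")
        case True
        have "norm (k x z - k y z) = 0"
        proof (cases "x = y")
          case False
          with xy have "d x y = 0" by simp
          moreover have "norm (k x z - k y z) \<le> C2 * d x y / (d x z * d y z)"
            using K x y True elim unfolding kernel_K1K2_def by blast
          ultimately show ?thesis by simp
        qed simp
        then show ?thesis by simp
      qed simp
    qed
  qed
  show ?thesis using nn_integral_cong_AE[OF ae] by simp
qed

lemma two_center:
  assumes K: "kernel_K1K2 S d k C1 C2" and x: "x \<in> S" and y: "y \<in> S" and r: "d x y > 0"
  shows "(\<integral>\<^sup>+ z\<in>S. ennreal (norm (k x z - k y z) * \<bar>\<omega> z\<bar>) \<partial>lebesgue)
    \<le> (\<integral>\<^sup>+ z\<in>S. ennreal (Pf C1 C2 (d x y) (d x z) * \<bar>\<omega> z\<bar>) \<partial>lebesgue)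
     + (\<integral>\<^sup>+ z\<in>S. ennreal (Pf C1 C2 (d x y) (d y z) * \<bar>\<omega> z\<bar>) \<partial>lebesgue)"
proof -
  have pm: "(\<lambda>z. Pf C1 C2 (d x y) (d c z)) \<in> borel_measurable lebesgue" if "c \<in> S" for c
    unfolding Pf_def using d_meas[OF that] by measurable
  have m1: "(\<lambda>z. ennreal (Pf C1 C2 (d x y) (d x z) * \<bar>\<omega> z\<bar>) * indicator S z) \<in> borel_measurable lebesgue"
    by (rule meas_gen[OF pm[OF x]])
  have m2: "(\<lambda>z. ennreal (Pf C1 C2 (d x y) (d y z) * \<bar>\<omega> z\<bar>) * indicator S z) \<in> borel_measurable lebesgue"
    by (rule meas_gen[OF pm[OF y]])
  have "(\<integral>\<^sup>+ z\<in>S. ennreal (norm (k x z - k y z) * \<bar>\<omega> z\<bar>) \<partial>lebesgue)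
    \<le> (\<integral>\<^sup>+ z. ennreal (Pf C1 C2 (d x y) (d x z) * \<bar>\<omega> z\<bar>) * indicator S z
        + ennreal (Pf C1 C2 (d x y) (d y z) * \<bar>\<omega> z\<bar>) * indicator S z \<partial>lebesgue)"
  proof (rule nn_integral_mono_AE)
    show "AE z in lebesgue. ennreal (norm (k x z - k y z) * \<bar>\<omega> z\<bar>) * indicator S z
      \<le> ennreal (Pf C1 C2 (d x y) (d x z) * \<bar>\<omega> z\<bar>) * indicator S z
        + ennreal (Pf C1 C2 (d x y) (d y z) * \<bar>\<omega> z\<bar>) * indicator S z"
      using ae_ne[of x] ae_ne[of y]
    proof eventually_elim
      case (elim z)
      show ?case
      proof (cases "z \<in> S")
        case True
        have pw: "norm (k x z - k y z) \<le> Pf C1 C2 (d x y) (d x z) + Pf C1 C2 (d x y) (d y z)"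
          by (rule kernel_pw[OF K x y True]) (use elim r d0[OF x] d0[OF y] in auto)
        have "norm (k x z - k y z) * \<bar>\<omega> z\<bar> \<le> (Pf C1 C2 (d x y) (d x z) + Pf C1 C2 (d x y) (d y z)) * \<bar>\<omega> z\<bar>"
          by (rule mult_right_mono[OF pw]) simp
        then have "ennreal (norm (k x z - k y z) * \<bar>\<omega> z\<bar>) \<le> ennreal (Pf C1 C2 (d x y) (d x z) * \<bar>\<omega> z\<bar> + Pf C1 C2 (d x y) (d y z) * \<bar>\<omega> z\<bar>)"
          by (intro ennreal_leI) (simp add: algebra_simps)
        also have "\<dots> = ennreal (Pf C1 C2 (d x y) (d x z) * \<bar>\<omega> z\<bar>) + ennreal (Pf C1 C2 (d x y) (d y z) * \<bar>\<omega> z\<bar>)"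
          using Pf_nonneg[OF d0[OF x] r] Pf_nonneg[OF d0[OF y] r] by (intro ennreal_plus) auto
        finally show ?thesis using True by simp
      qed simp
    qed
  qed
  also have "\<dots> = (\<integral>\<^sup>+ z\<in>S. ennreal (Pf C1 C2 (d x y) (d x z) * \<bar>\<omega> z\<bar>) \<partial>lebesgue)
     + (\<integral>\<^sup>+ z\<in>S. ennreal (Pf C1 C2 (d x y) (d y z) * \<bar>\<omega> z\<bar>) \<partial>lebesgue)"
    by (rule nn_integral_add[OF m1 m2])
  finally show ?thesis .
qed

lemma master:
  assumes K: "kernel_K1K2 S d k C1 C2" and x: "x \<in> S" and y: "y \<in> S"
    and ul: "memLp_ul p S d \<omega>" and p: "2 < p" and q: "1 \<le> q" "q < 2" and mq: "memLp q S \<omega>"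
  shows "(\<integral>\<^sup>+ z\<in>S. ennreal (norm (k x z - k y z) * \<bar>\<omega> z\<bar>) \<partial>lebesgue)
    \<le> ennreal (2 * Kt C1 C2 q * (max 1 (1/(p-2)) * (ul_norm p S d \<omega> + Lp_norm q S \<omega>))
          * (if d x y \<le> 1/2 then p * d x y powr (1-2/p) else 1))"
proof (cases "x = y \<or> d x y = 0")
  case True
  then show ?thesis using lhs_zero[OF K x y] by simp
next
  case False
  then have r: "d x y > 0" using d0[OF x, of y] by auto
  define W where "W = max 1 (1/(p-2)) * (ul_norm p S d \<omega> + Lp_norm q S \<omega>)"
  define F where "F = (if d x y \<le> 1/2 then p * d x y powr (1-2/p) else 1)"
  have W0: "W \<ge> 0" unfolding W_def using ul_bound(2)[OF ul x _, of "{}"] p Lp_norm_nonneg[of q S \<omega>]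
    by (intro mult_nonneg_nonneg) auto
  have F0: "F \<ge> 0" unfolding F_def using p by auto
  note KP = Kt_props[of C1 C2 q]
  have cen: "(\<integral>\<^sup>+ z\<in>S. ennreal (Pf C1 C2 (d x y) (d c z) * \<bar>\<omega> z\<bar>) \<partial>lebesgue) \<le> ennreal (Kt C1 C2 q * W * F)"
    if c: "c \<in> S" for c
  proof (cases "d x y \<le> 1/2")
    case True
    have "(\<integral>\<^sup>+ z\<in>S. ennreal (Pf C1 C2 (d x y) (d c z) * \<bar>\<omega> z\<bar>) \<partial>lebesgue)
      \<le> ennreal ((2884*\<bar>C1\<bar> + 145*\<bar>C2\<bar> + \<bar>C2\<bar> * Kq q) * (max 1 (1/(p-2)) * p * (ul_norm p S d \<omega> + Lp_norm q S \<omega>) * d x y powr (1-2/p)))"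
      by (rule cb_small[OF ul p q mq c r True])
    also have "\<dots> = ennreal ((2884*\<bar>C1\<bar> + 145*\<bar>C2\<bar> + \<bar>C2\<bar> * Kq q) * W * F)"
      using True by (simp add: W_def F_def mult_ac)
    also have "\<dots> \<le> ennreal (Kt C1 C2 q * W * F)"
      using KP W0 F0 by (intro ennreal_leI mult_right_mono) auto
    finally show ?thesis .
  next
    case False
    then have r2: "1/2 < d x y" by simp
    have "(\<integral>\<^sup>+ z\<in>S. ennreal (Pf C1 C2 (d x y) (d c z) * \<bar>\<omega> z\<bar>) \<partial>lebesgue)
      \<le> ennreal ((2*\<bar>C1\<bar> + \<bar>C2\<bar>) * (721 + Kq q) * W)"
      unfolding W_def by (rule cb_large[OF ul p q mq c r2])
    also have "\<dots> = ennreal ((2*\<bar>C1\<bar> + \<bar>C2\<bar>) * (721 + Kq q) * W * F)"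
      using False by (simp add: F_def)
    also have "\<dots> \<le> ennreal (Kt C1 C2 q * W * F)"
      using KP W0 F0 by (intro ennreal_leI mult_right_mono) auto
    finally show ?thesis .
  qed
  have "(\<integral>\<^sup>+ z\<in>S. ennreal (norm (k x z - k y z) * \<bar>\<omega> z\<bar>) \<partial>lebesgue)
    \<le> ennreal (Kt C1 C2 q * W * F) + ennreal (Kt C1 C2 q * W * F)"
    using two_center[OF K x y r] cen[OF x] cen[OF y] by (meson add_mono order_trans)
  also have "\<dots> = ennreal (2 * Kt C1 C2 q * W * F)"
    using KP W0 F0 by (subst ennreal_plus[symmetric]) (auto simp: mult_ac)
  finally show ?thesis by (simp add: W_def F_def mult_ac)
qed

end



lemma pre_ge1:
  assumes p: "2 < (p::real)" and r: "1/2 < r" shows "1 \<le> p * r powr (1 - 2/p)"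
proof (cases "1 \<le> r")
  case True
  then have "1 \<le> r powr (1 - 2/p)" using p by (intro ge_one_powr_ge_zero) auto
  then show ?thesis using p mult_mono[of 1 p 1 "r powr (1-2/p)"] by simp
next
  case False
  then have "r powr 1 \<le> r powr (1 - 2/p)" using r p by (intro powr_mono') auto
  then have "r \<le> r powr (1 - 2/p)" using r by simp
  then have "2 * (1/2) \<le> p * r powr (1 - 2/p)" using p r by (intro mult_mono) auto
  then show ?thesis by simp
qed

lemma exp_neg2: "exp (-2::real) < 1/2"
proof -
  have "1 + 2 \<le> exp (2::real)" by (rule exp_ge_add_one_self)
  then show ?thesis by (simp add: exp_minus field_simps)
qed

lemma rpow_small:
  assumes r: "0 < (r::real)" "r \<le> exp (-2)"
  shows "r powr (1 - 2 / (1 - ln r)) \<le> exp 2 * r"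
proof -
  have "ln r \<le> ln (exp (-2))" using r by (subst ln_le_cancel_iff) auto
  then have lr: "ln r \<le> -2" by simp
  define p where "p = 1 - ln r"
  have p: "p \<ge> 3" using lr by (simp add: p_def)
  have "r powr (1 - 2/p) = exp ((1 - 2/p) * ln r)" using r by (simp add: powr_def)
  also have "(1 - 2/p) * ln r = ln r + 2 * (- ln r / p)" using p by (simp add: field_simps)
  also have "exp (ln r + 2 * (- ln r / p)) = r * exp (2 * (- ln r / p))"
    using r by (simp only: exp_add exp_ln)
  also have "\<dots> \<le> r * exp 2"
  proof -
    have "- ln r / p \<le> 1" using p by (simp add: p_def field_simps)
    then show ?thesis using r by (intro mult_left_mono) auto
  qed
  finally show ?thesis by (simp add: p_def mult.commute)
qed


theorem mainTheorem2:
  fixes C1 C2 q :: real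
  assumes "1 \<le> q" and "q < 2"
  shows "(\<exists>C>0. \<forall>S d k \<omega> p x y.
            admissible_domain S d \<longrightarrow> kernel_K1K2 S d k C1 C2 \<longrightarrow>
            2 < p \<longrightarrow> memLp q S \<omega> \<longrightarrow> memLp_ul p S d \<omega> \<longrightarrow> x \<in> S \<longrightarrow> y \<in> S \<longrightarrow>
            (\<integral>\<^sup>+ z\<in>S. ennreal (norm (k x z - k y z) * \<bar>\<omega> z\<bar>) \<partial>lebesgue)
              \<le> ennreal (C * max 1 (1 / (p - 2)) * (Lp_norm q S \<omega> + ul_norm p S d \<omega>)
                         * p * d x y powr (1 - 2 / p)))
       \<and> (\<exists>C'>0. \<forall>S d k \<omega> \<Theta> x y.
            admissible_domain S d \<longrightarrow> kernel_K1K2 S d k C1 C2 \<longrightarrow>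
            growth_function \<Theta> \<longrightarrow> memLp q S \<omega> \<longrightarrow> memY_ul \<Theta> S d \<omega> \<longrightarrow> x \<in> S \<longrightarrow> y \<in> S \<longrightarrow>
            (\<integral>\<^sup>+ z\<in>S. ennreal (norm (k x z - k y z) * \<bar>\<omega> z\<bar>) \<partial>lebesgue)
              \<le> ennreal (C' * (Lp_norm q S \<omega> + Y_ul_norm \<Theta> S d \<omega>) * phi_Theta \<Theta> (d x y)))"
proof (intro conjI)
  note q = assms
  note KP = Kt_props[of C1 C2 q]
  show "\<exists>C>0. \<forall>S d k \<omega> p x y.
            admissible_domain S d \<longrightarrow> kernel_K1K2 S d k C1 C2 \<longrightarrow>
            2 < p \<longrightarrow> memLp q S \<omega> \<longrightarrow> memLp_ul p S d \<omega> \<longrightarrow> x \<in> S \<longrightarrow> y \<in> S \<longrightarrow>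
            (\<integral>\<^sup>+ z\<in>S. ennreal (norm (k x z - k y z) * \<bar>\<omega> z\<bar>) \<partial>lebesgue)
              \<le> ennreal (C * max 1 (1 / (p - 2)) * (Lp_norm q S \<omega> + ul_norm p S d \<omega>)
                         * p * d x y powr (1 - 2 / p))"
  proof (intro exI[of _ "2 * Kt C1 C2 q"] conjI allI impI)
    show "0 < 2 * Kt C1 C2 q" using KP by simp
    fix S d k \<omega> p x y
    assume adm: "admissible_domain S d" and K: "kernel_K1K2 S d k C1 C2" and p: "2 < p"
      and mq: "memLp q S \<omega>" and ul: "memLp_ul p S d \<omega>" and x: "x \<in> S" and y: "y \<in> S"
    interpret ctx S d \<omega> using admissible_good[OF adm] mq by unfold_locales (auto simp: memLp_def)
    define W where "W = max 1 (1/(p-2)) * (ul_norm p S d \<omega> + Lp_norm q S \<omega>)"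
    have W0: "W \<ge> 0" unfolding W_def using ul_bound(2)[OF ul x _, of "{}"] p Lp_norm_nonneg[of q S \<omega>]
      by (intro mult_nonneg_nonneg) auto
    have F: "(if d x y \<le> 1/2 then p * d x y powr (1-2/p) else 1) \<le> p * d x y powr (1 - 2/p)"
      using pre_ge1[OF p, of "d x y"] by auto
    have "(\<integral>\<^sup>+ z\<in>S. ennreal (norm (k x z - k y z) * \<bar>\<omega> z\<bar>) \<partial>lebesgue)
      \<le> ennreal (2 * Kt C1 C2 q * W * (if d x y \<le> 1/2 then p * d x y powr (1-2/p) else 1))"
      unfolding W_def by (rule master[OF K x y ul p q mq])
    also have "\<dots> \<le> ennreal (2 * Kt C1 C2 q * W * (p * d x y powr (1 - 2/p)))"
      using KP W0 F by (intro ennreal_leI mult_left_mono) auto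
    also have "\<dots> = ennreal (2 * Kt C1 C2 q * max 1 (1 / (p - 2)) * (Lp_norm q S \<omega> + ul_norm p S d \<omega>)
                         * p * d x y powr (1 - 2 / p))"
      by (simp add: W_def mult_ac add.commute)
    finally show "(\<integral>\<^sup>+ z\<in>S. ennreal (norm (k x z - k y z) * \<bar>\<omega> z\<bar>) \<partial>lebesgue)
      \<le> ennreal (2 * Kt C1 C2 q * max 1 (1 / (p - 2)) * (Lp_norm q S \<omega> + ul_norm p S d \<omega>)
                         * p * d x y powr (1 - 2 / p))" .
  qed
  show "\<exists>C'>0. \<forall>S d k \<omega> \<Theta> x y.
            admissible_domain S d \<longrightarrow> kernel_K1K2 S d k C1 C2 \<longrightarrow>
            growth_function \<Theta> \<longrightarrow> memLp q S \<omega> \<longrightarrow> memY_ul \<Theta> S d \<omega> \<longrightarrow> x \<in> S \<longrightarrow> y \<in> S \<longrightarrow>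
            (\<integral>\<^sup>+ z\<in>S. ennreal (norm (k x z - k y z) * \<bar>\<omega> z\<bar>) \<partial>lebesgue)
              \<le> ennreal (C' * (Lp_norm q S \<omega> + Y_ul_norm \<Theta> S d \<omega>) * phi_Theta \<Theta> (d x y))"
  proof (intro exI[of _ "2 * Kt C1 C2 q * exp 2"] conjI allI impI)
    show "0 < 2 * Kt C1 C2 q * exp 2" using KP by simp
    fix S d k \<omega> \<Theta> x y
    assume adm: "admissible_domain S d" and K: "kernel_K1K2 S d k C1 C2" and gf: "growth_function \<Theta>"
      and mq: "memLp q S \<omega>" and mY: "memY_ul \<Theta> S d \<omega>" and x: "x \<in> S" and y: "y \<in> S"
    interpret ctx S d \<omega> using admissible_good[OF adm] mq by unfold_locales (auto simp: memLp_def)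
    define Y where "Y = Y_ul_norm \<Theta> S d \<omega>"
    define N where "N = Lp_norm q S \<omega>"
    define r where "r = d x y"
    define C' where "C' = 2 * Kt C1 C2 q * exp 2"
    have N0: "N \<ge> 0" unfolding N_def by (rule Lp_norm_nonneg)
    have Th: "\<And>p. 1 \<le> p \<Longrightarrow> \<Theta> p > 0" and Tm: "mono_on {1..} \<Theta>" and T3: "\<Theta> 3 \<ge> 1"
      using gf unfolding growth_function_def by auto
    have Tge: "\<Theta> p \<ge> 1" if "3 \<le> p" for p
    proof -
      have "\<Theta> 3 \<le> \<Theta> p" using Tm that by (intro mono_onD[OF Tm]) auto
      then show ?thesis using T3 by simp
    qed
    have ulp: "memLp_ul p S d \<omega>" if "1 \<le> p" for p using mY that unfolding memY_ul_def by auto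
    have bddY: "bdd_above ((\<lambda>p. ul_norm p S d \<omega> / \<Theta> p) ` {1..})" using mY unfolding memY_ul_def by auto
    have UY: "ul_norm p S d \<omega> \<le> \<Theta> p * Y" if "1 \<le> p" for p
    proof -
      have "ul_norm p S d \<omega> / \<Theta> p \<le> Y" unfolding Y_def Y_ul_norm_def
        by (rule cSUP_upper[OF _ bddY]) (use that in auto)
      then show ?thesis using Th[OF that] by (simp add: field_simps)
    qed
    have U0: "ul_norm p S d \<omega> \<ge> 0" if "1 \<le> p" for p
      using ul_bound(2)[OF ulp[OF that] x _, of "{}"] that by simp
    have Y0: "Y \<ge> 0"
    proof -
      have "0 \<le> ul_norm 3 S d \<omega> / \<Theta> 3" using U0[of 3] Th[of 3] by simp
      also have "\<dots> \<le> Y" unfolding Y_def Y_ul_norm_def by (rule cSUP_upper[OF _ bddY]) auto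
      finally show ?thesis .
    qed
    have UN: "ul_norm p S d \<omega> + N \<le> \<Theta> p * (N + Y)" if "3 \<le> p" for p
    proof -
      have "N \<le> \<Theta> p * N" using Tge[OF that] N0 le_mult1 by blast
      then show ?thesis using UY[of p] that by (simp add: algebra_simps)
    qed
    show "(\<integral>\<^sup>+ z\<in>S. ennreal (norm (k x z - k y z) * \<bar>\<omega> z\<bar>) \<partial>lebesgue)
      \<le> ennreal (2 * Kt C1 C2 q * exp 2 * (Lp_norm q S \<omega> + Y_ul_norm \<Theta> S d \<omega>) * phi_Theta \<Theta> (d x y))"
    proof (cases "x = y \<or> d x y = 0")
      case True
      then show ?thesis using lhs_zero[OF K x y] by simp
    next
      case False
      then have r: "r > 0" using d0[OF x, of y] by (auto simp: r_def)
      show ?thesis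
      proof (cases "r \<le> exp (-2)")
        case True
        define p where "p = 1 - ln r"
        have "ln r \<le> ln (exp (-2))" using r True by (subst ln_le_cancel_iff) auto
        then have p3: "3 \<le> p" by (simp add: p_def)
        have p2: "2 < p" using p3 by simp
        have rh: "r \<le> 1/2" using True exp_neg2 by simp
        have M1: "max 1 (1/(p-2)) = 1" using p3 by simp
        have "(\<integral>\<^sup>+ z\<in>S. ennreal (norm (k x z - k y z) * \<bar>\<omega> z\<bar>) \<partial>lebesgue)
          \<le> ennreal (2 * Kt C1 C2 q * (max 1 (1/(p-2)) * (ul_norm p S d \<omega> + N))
                * (if r \<le> 1/2 then p * r powr (1-2/p) else 1))"
          unfolding N_def r_def by (rule master[OF K x y ulp p2 q mq]) (use p3 in auto)
        also have "\<dots> = ennreal (2 * Kt C1 C2 q * (ul_norm p S d \<omega> + N) * (p * r powr (1-2/p)))"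
          using M1 rh by simp
        also have "\<dots> \<le> ennreal (2 * Kt C1 C2 q * (\<Theta> p * (N + Y)) * (p * (exp 2 * r)))"
        proof (intro ennreal_leI mult_mono mult_left_mono)
          show "ul_norm p S d \<omega> + N \<le> \<Theta> p * (N + Y)" by (rule UN[OF p3])
          show "r powr (1 - 2/p) \<le> exp 2 * r" unfolding p_def by (rule rpow_small[OF r True])
        qed (use KP p3 U0[of p] N0 Y0 Th[of p] r in auto)
        also have "\<dots> = ennreal (C' * (N + Y) * phi_Theta \<Theta> r)"
          using r True by (simp add: phi_Theta_def C'_def p_def mult_ac)
        finally show ?thesis by (simp add: C'_def N_def Y_def r_def)
      next
        case False
        have M1: "max 1 (1/(3-2::real)) = 1" by simp
        have F3: "(if r \<le> 1/2 then 3 * r powr (1-2/3) else 1) \<le> (3::real)"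
        proof (cases "r \<le> 1/2")
          case True
          then have "r powr (1-2/3) \<le> 1" using r by (intro powr_le1) auto
          then show ?thesis using True by simp
        qed simp
        have "(\<integral>\<^sup>+ z\<in>S. ennreal (norm (k x z - k y z) * \<bar>\<omega> z\<bar>) \<partial>lebesgue)
          \<le> ennreal (2 * Kt C1 C2 q * (max 1 (1/(3-2)) * (ul_norm 3 S d \<omega> + N))
                * (if r \<le> 1/2 then 3 * r powr (1-2/3) else 1))"
          unfolding N_def r_def by (rule master[OF K x y ulp _ q mq]) auto
        also have "\<dots> \<le> ennreal (2 * Kt C1 C2 q * (\<Theta> 3 * (N + Y)) * 3)"
        proof (rule ennreal_leI)
          have a: "2 * Kt C1 C2 q * (1 * (ul_norm 3 S d \<omega> + N)) \<le> 2 * Kt C1 C2 q * (\<Theta> 3 * (N + Y))"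
            using KP UN[of 3] by (intro mult_left_mono) auto
          have F0: "0 \<le> (if r \<le> 1/2 then 3 * r powr (1-2/3) else (1::real))" by simp
          have b: "0 \<le> 2 * Kt C1 C2 q * (\<Theta> 3 * (N + Y))" using KP T3 N0 Y0 by simp
          show "2 * Kt C1 C2 q * (max 1 (1/(3-2)) * (ul_norm 3 S d \<omega> + N))
                * (if r \<le> 1/2 then 3 * r powr (1-2/3) else 1) \<le> 2 * Kt C1 C2 q * (\<Theta> 3 * (N + Y)) * 3"
            unfolding M1 by (rule mult_mono[OF a F3 b F0])
        qed
        also have "\<dots> = ennreal (C' * (N + Y) * phi_Theta \<Theta> r)"
        proof -
          have "phi_Theta \<Theta> r = 3 * exp (-2) * \<Theta> 3" using False r by (simp add: phi_Theta_def)
          moreover have "exp 2 * exp (-2) = (1::real)" by (simp add: exp_minus)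
          ultimately show ?thesis unfolding C'_def by (simp add: mult_ac)
        qed
        finally show ?thesis by (simp add: C'_def N_def Y_def r_def)
      qed
    qed
  qed
qed



end
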